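(* For $x>0$ let $\mathcal{S}[x]=\{v\in\mathbb{C}:\ \operatorname{Im}v\in[-x,x]\}$. Say a function $g$ is ANZC in $\mathcal{S}[x]$ if it is analytic and nonzero in $\mathcal{S}[x]$ and tends to constant values as $\operatorname{Re}v\to\pm\infty$ in $\mathcal{S}[x]$. Let $M\ge1$ and let $v_0,v_1,\dots,v_M\ge0$ be real numbers with $v_0>v_j$ for $j\ge1$. Suppose functions $g_0,\dots,g_M$ satisfy $$g_0(v-iv_0)\,g_0(v+iv_0)=\prod_{j=1}^{M}g_j(v-iv_j)\,g_j(v+iv_j),$$ and that for each $j\ge0$, $g_j$ is ANZC in $\mathcal{S}[w_j]$ for some $w_j\ge v_j$. Then there is a constant $C$ such that for real $v$ $$\ln g_0(v)=\sum_{j=1}^{M}\int_{-\infty}^{\infty}R_j(v-v')\ln g_j(v')\,dv'+C,\qquad R_j(v)=\frac{1}{2\pi}\int_{-\infty}^{\infty}e^{ikv}\frac{\cosh v_jk}{\cosh v_0k}\,dk,$$ where $C$ is determined by the asymptotic values of both sides. *)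

theory Defs
  imports "HOL-Analysis.Analysis"
begin

definition strip :: "real \<Rightarrow> complex set" where
  "strip x = {v. \<bar>Im v\<bar> \<le> x}"

definition ANZC :: "(complex \<Rightarrow> complex) \<Rightarrow> real \<Rightarrow> bool" where
  "ANZC g x \<longleftrightarrow>
     g analytic_on strip x \<and>
     (\<forall>v\<in>strip x. g v \<noteq> 0) \<and>
     (\<exists>c. c \<noteq> 0 \<and> (g \<longlongrightarrow> c) (inf (filtercomap Re at_top) (principal (strip x)))) \<and>
     (\<exists>c. c \<noteq> 0 \<and> (g \<longlongrightarrow> c) (inf (filtercomap Re at_bot) (principal (strip x))))"

definition kernel :: "real \<Rightarrow> real \<Rightarrow> real \<Rightarrow> complex" where
  "kernel a b v = complex_of_real (1 / (2 * pi)) *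
     integral\<^sup>L lborel (\<lambda>k::real. exp (\<i> * complex_of_real (k * v)) *
                                     complex_of_real (cosh (b * k) / cosh (a * k)))"

end

theory Submission
  imports Defs "HOL-Complex_Analysis.Complex_Analysis" "HOL-Probability.Sinc_Integral" "HOL-Real_Asymp.Real_Asymp"
begin

lemma has_contour_integral_linepath_shift:
  "(f has_contour_integral I) (linepath (a + w) (b + w)) \<longleftrightarrow>
   ((\<lambda>z. f (z + w)) has_contour_integral I) (linepath a b)"
proof -
  have "linepath (a + w) (b + w) x = linepath a b x + w" for x
    by (simp add: linepath_def algebra_simps)
  then show ?thesis unfolding has_contour_integral_linepath by simp
qed

lemma has_contour_integral_horizontal:
  assumes "x1 < x2"
  shows "(f has_contour_integral I) (linepath (Complex x1 c) (Complex x2 c)) \<longleftrightarrow>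
         ((\<lambda>t. f (Complex t c)) has_integral I) {x1..x2}"
proof -
  have e: "Complex x c = of_real x + \<i> * of_real c" for x by (simp add: Complex_eq)
  have "(f has_contour_integral I) (linepath (Complex x1 c) (Complex x2 c)) \<longleftrightarrow>
        ((\<lambda>z. f (z + \<i> * of_real c)) has_contour_integral I) (linepath (of_real x1) (of_real x2))"
    unfolding e by (rule has_contour_integral_linepath_shift)
  also have "\<dots> \<longleftrightarrow> ((\<lambda>t. f (of_real t + \<i> * of_real c)) has_integral I) {x1..x2}"
    using has_contour_integral_linepath_Reals_iff[of "of_real x1" "of_real x2" "\<lambda>z. f (z + \<i> * of_real c)" I] assms
    by simp
  finally show ?thesis by (simp add: e)
qed

lemma integrable_exp_abs:
  fixes \<alpha> :: real assumes "\<alpha> > 0"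
  shows "integrable lborel (\<lambda>t::real. exp (-\<alpha> * \<bar>t\<bar>))"
proof -
  have i1: "integrable lborel (\<lambda>x::real. indicator {0<..} x *\<^sub>R exp (-(x * \<alpha>)))"
    using integrable_I0i_exp_mscale[OF assms] by (simp add: set_integrable_def)
  have i2: "integrable lborel (\<lambda>x::real. indicator {0<..} (-x) *\<^sub>R exp (-((-x) * \<alpha>)))"
    using lborel_integrable_real_affine_iff[of "-1" "\<lambda>x. indicator {0<..} x *\<^sub>R exp (-(x * \<alpha>))" 0] i1
    by simp
  have i3: "integrable lborel (\<lambda>t::real. indicator {0<..} t *\<^sub>R exp (-(t * \<alpha>)) + indicator {0<..} (-t) *\<^sub>R exp (-((-t) * \<alpha>)) + indicator {0} t)"
    by (intro Bochner_Integration.integrable_add i1 i2) (simp add: integrable_indicator_iff) 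
  show ?thesis
    by (rule Bochner_Integration.integrable_cong[THEN iffD1, OF refl _ i3]) (auto simp: indicator_def abs_if)
qed

lemma line_integral_limit:
  fixes g :: "real \<Rightarrow> complex"
  assumes cont: "continuous_on UNIV g" and \<alpha>: "\<alpha> > 0"
    and bnd: "\<And>t. norm (g t) \<le> B * exp (-\<alpha> * \<bar>t\<bar>)"
  shows "integrable lborel g"
    "((\<lambda>T. integral {-T..T} g) \<longlongrightarrow> (LINT t|lborel. g t)) at_top"
proof -
  have meas: "g \<in> borel_measurable lborel"
    using borel_measurable_continuous_onI[OF cont] by simp
  have "integrable lborel (\<lambda>t. B * exp (-\<alpha> * \<bar>t\<bar>))"
    using integrable_exp_abs[OF \<alpha>] by simp
  then show ig: "integrable lborel g"
    by (rule Bochner_Integration.integrable_bound[OF _ meas]) (use bnd in \<open>auto intro!: AE_I2 intro: order_trans[OF _ abs_ge_self]\<close>)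
  have si: "set_integrable lborel {-T..T} g" for T
    unfolding set_integrable_def by (rule integrable_mult_indicator[OF _ ig]) simp
  have eq: "(LINT t|lborel. indicator {-T..T} t *\<^sub>R g t) = integral {-T..T} g" for T
    using set_borel_integral_eq_integral(2)[OF si[of T]] by (simp add: set_lebesgue_integral_def)
  have "((\<lambda>T. LINT t|lborel. indicator {-T..T} t *\<^sub>R g t) \<longlongrightarrow> (LINT t|lborel. g t)) at_top"
  proof (rule integral_dominated_convergence_at_top[where w = "\<lambda>t. norm (g t)"])
    show "integrable lborel (\<lambda>t. norm (g t))" using ig by simp
    show "AE x in lborel. ((\<lambda>T. indicator {-T..T} x *\<^sub>R g x) \<longlongrightarrow> g x) at_top"
    proof (rule AE_I2)
      fix x :: real
      have "\<forall>\<^sub>F T in at_top. indicator {-T..T} x *\<^sub>R g x = g x"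
        using eventually_ge_at_top[of "\<bar>x\<bar>"] by eventually_elim (auto simp: indicator_def)
      then show "((\<lambda>T. indicator {-T..T} x *\<^sub>R g x) \<longlongrightarrow> g x) at_top"
        by (rule tendsto_eventually)
    qed
    show "\<forall>\<^sub>F T in at_top. AE x in lborel. norm (indicator {-T..T} x *\<^sub>R g x) \<le> norm (g x)"
      by (auto simp: indicator_def)
  qed (use meas in auto)
  then show "((\<lambda>T. integral {-T..T} g) \<longlongrightarrow> (LINT t|lborel. g t)) at_top"
    by (simp add: eq)
qed

lemma strip_shift:
  fixes f :: "complex \<Rightarrow> complex"
  assumes cd: "c < d" and \<alpha>: "\<alpha> > 0" and Rz: "Rz \<ge> 0"
    and cont_c: "continuous_on {z. Im z = c} f" and cont_d: "continuous_on {z. Im z = d} f"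
    and cont_v: "continuous_on {z. Rz \<le> \<bar>Re z\<bar> \<and> c \<le> Im z \<and> Im z \<le> d} f"
    and bc: "\<And>t. norm (f (Complex t c)) \<le> B * exp (-\<alpha> * \<bar>t\<bar>)"
    and bd: "\<And>t. norm (f (Complex t d)) \<le> B * exp (-\<alpha> * \<bar>t\<bar>)"
    and bv: "\<And>z. Rz \<le> \<bar>Re z\<bar> \<Longrightarrow> c \<le> Im z \<Longrightarrow> Im z \<le> d \<Longrightarrow> norm (f z) \<le> B * exp (-\<alpha> * \<bar>Re z\<bar>)"
    and rect: "\<And>T. Rz < T \<Longrightarrow> (f has_contour_integral J) (rectpath (Complex (-T) c) (Complex T d))"
  shows "integrable lborel (\<lambda>t. f (Complex t c))" "integrable lborel (\<lambda>t. f (Complex t d))"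
    "(LINT t|lborel. f (Complex t c)) - (LINT t|lborel. f (Complex t d)) = J"
proof -
  have B0: "B \<ge> 0" using bc[of 0] by (smt (verit) norm_ge_zero exp_zero mult_cancel_left1 mult.commute)
  have contl: "continuous_on UNIV (\<lambda>t. f (Complex t y))" if "continuous_on {z. Im z = y} f" for y
  proof -
    have "continuous_on UNIV (\<lambda>t::real. Complex t y)"
      unfolding Complex_eq by (intro continuous_intros)
    then show ?thesis
      by (rule continuous_on_compose2[OF that]) auto
  qed
  note Lc = line_integral_limit[OF contl[OF cont_c] \<alpha> bc]
  note Ld = line_integral_limit[OF contl[OF cont_d] \<alpha> bd]
  show "integrable lborel (\<lambda>t. f (Complex t c))" "integrable lborel (\<lambda>t. f (Complex t d))"
    using Lc(1) Ld(1) .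
  define ic where "ic T = integral {-T..T} (\<lambda>t. f (Complex t c))" for T
  define id where "id T = integral {-T..T} (\<lambda>t. f (Complex t d))" for T
  have key: "norm (ic T - id T - J) \<le> 2 * B * (d - c) * exp (-\<alpha> * T)" if T: "Rz < T" for T
  proof -
    have T0: "T > 0" using T Rz by linarith
    define a1 a2 a3 a4 where "a1 = Complex (-T) c" and "a2 = Complex T c"
      and "a3 = Complex T d" and "a4 = Complex (-T) d"
    have ci: "(\<lambda>t. f (Complex t y)) integrable_on {-T..T}" if "continuous_on {z. Im z = y} f" for y
      by (rule integrable_continuous_interval) (rule continuous_on_subset[OF contl[OF that]], simp)
    have h1: "(f has_contour_integral ic T) (linepath a1 a2)"
      unfolding a1_def a2_def ic_def
      by (subst has_contour_integral_horizontal) (use T0 ci[OF cont_c] in auto)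
    have h3': "(f has_contour_integral id T) (linepath a4 a3)"
      unfolding a3_def a4_def id_def
      by (subst has_contour_integral_horizontal) (use T0 ci[OF cont_d] in auto)
    have h3: "(f has_contour_integral - id T) (linepath a3 a4)"
      using has_contour_integral_reverse_linepath[OF h3'] .
    have vs: "closed_segment (Complex x c) (Complex x d) \<subseteq> {z. Rz \<le> \<bar>Re z\<bar> \<and> c \<le> Im z \<and> Im z \<le> d}"
      if "Rz \<le> \<bar>x\<bar>" for x
      using that cd by (auto simp: closed_segment_same_Re closed_segment_eq_real_ivl)
    have vs': "closed_segment (Complex x d) (Complex x c) \<subseteq> {z. Rz \<le> \<bar>Re z\<bar> \<and> c \<le> Im z \<and> Im z \<le> d}"
      if "Rz \<le> \<bar>x\<bar>" for x
      using vs[OF that] by (simp add: closed_segment_commute)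
    have i2: "f contour_integrable_on linepath a2 a3"
      unfolding a2_def a3_def
      by (rule contour_integrable_continuous_linepath, rule continuous_on_subset[OF cont_v vs]) (use T in auto)
    have i4: "f contour_integrable_on linepath a4 a1"
      unfolding a4_def a1_def
      by (rule contour_integrable_continuous_linepath, rule continuous_on_subset[OF cont_v vs']) (use T in auto)
    define I2 I4 where "I2 = contour_integral (linepath a2 a3) f" and "I4 = contour_integral (linepath a4 a1) f"
    have h2: "(f has_contour_integral I2) (linepath a2 a3)" using i2 unfolding I2_def
      by (rule has_contour_integral_integral)
    have h4: "(f has_contour_integral I4) (linepath a4 a1)" using i4 unfolding I4_def
      by (rule has_contour_integral_integral)
    have "(f has_contour_integral (ic T + (I2 + (- id T + I4)))) (rectpath a1 a3)"
      unfolding rectpath_def Let_def a1_def a3_def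
      apply (simp only: complex.sel)
      unfolding a1_def[symmetric] a2_def[symmetric] a3_def[symmetric] a4_def[symmetric]
      by (intro has_contour_integral_join h1 h2 h3 h4 valid_path_join valid_path_linepath) auto
    moreover have "(f has_contour_integral J) (rectpath a1 a3)"
      unfolding a1_def a3_def using rect[OF T] .
    ultimately have J: "J = ic T + (I2 + (- id T + I4))"
      using has_contour_integral_unique by blast
    have nI2: "norm I2 \<le> B * exp (-\<alpha> * T) * norm (a3 - a2)"
    proof (rule has_contour_integral_bound_linepath[OF h2])
      show "0 \<le> B * exp (-\<alpha> * T)" using B0 by simp
      fix z assume "z \<in> closed_segment a2 a3"
      then have "z \<in> {z. Rz \<le> \<bar>Re z\<bar> \<and> c \<le> Im z \<and> Im z \<le> d}" and "Re z = T"
        using T cd unfolding a2_def a3_def by (auto simp: closed_segment_same_Re closed_segment_eq_real_ivl)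
      then show "norm (f z) \<le> B * exp (-\<alpha> * T)" using bv[of z] T0 by auto
    qed
    have nI4: "norm I4 \<le> B * exp (-\<alpha> * T) * norm (a1 - a4)"
    proof (rule has_contour_integral_bound_linepath[OF h4])
      show "0 \<le> B * exp (-\<alpha> * T)" using B0 by simp
      fix z assume "z \<in> closed_segment a4 a1"
      then have "z \<in> {z. Rz \<le> \<bar>Re z\<bar> \<and> c \<le> Im z \<and> Im z \<le> d}" and "Re z = -T"
        using T cd unfolding a4_def a1_def by (auto simp: closed_segment_same_Re closed_segment_eq_real_ivl)
      then show "norm (f z) \<le> B * exp (-\<alpha> * T)" using bv[of z] T0 by auto
    qed
    have n32: "norm (a3 - a2) = d - c" "norm (a1 - a4) = d - c"
      unfolding a1_def a2_def a3_def a4_def using cd by (auto simp: cmod_def)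
    have "ic T - id T - J = - (I2 + I4)" using J by (simp add: algebra_simps)
    then have "norm (ic T - id T - J) \<le> norm I2 + norm I4"
      by (metis norm_minus_cancel norm_triangle_ineq)
    then show ?thesis using nI2 nI4 n32 by (simp add: algebra_simps)
  qed
  have "((\<lambda>T. ic T - id T - J) \<longlongrightarrow> 0) at_top"
  proof (rule Lim_null_comparison)
    show "\<forall>\<^sub>F T in at_top. norm (ic T - id T - J) \<le> 2 * B * (d - c) * exp (-\<alpha> * T)"
      using eventually_gt_at_top[of Rz] by eventually_elim (rule key)
    show "((\<lambda>T. 2 * B * (d - c) * exp (-\<alpha> * T)) \<longlongrightarrow> 0) at_top"
      using \<alpha> by real_asymp
  qed
  then have "((\<lambda>T. ic T - id T - J + J) \<longlongrightarrow> 0 + J) at_top"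
    by (intro tendsto_add tendsto_const)
  then have "((\<lambda>T. ic T - id T) \<longlongrightarrow> J) at_top" by simp
  moreover have "((\<lambda>T. ic T - id T) \<longlongrightarrow> (LINT t|lborel. f (Complex t c)) - (LINT t|lborel. f (Complex t d))) at_top"
    unfolding ic_def id_def by (intro tendsto_diff Lc(2) Ld(2))
  ultimately show "(LINT t|lborel. f (Complex t c)) - (LINT t|lborel. f (Complex t d)) = J"
    using tendsto_unique by force
qed

definition Ech :: "complex \<Rightarrow> complex" where "Ech u = exp u + exp (-u)"

lemma norm_Ech_ge1: "exp \<bar>Re u\<bar> - exp (-\<bar>Re u\<bar>) \<le> norm (Ech u)"
proof -
  have "norm (exp u) - norm (exp (-u)) \<le> norm (Ech u)" "norm (exp (-u)) - norm (exp u) \<le> norm (Ech u)"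
    unfolding Ech_def using norm_triangle_ineq4[of "exp u + exp (-u)" "exp (-u)"] norm_triangle_ineq4[of "exp u + exp (-u)" "exp u"]
    by simp_all
  then show ?thesis by (cases "Re u \<ge> 0") (auto simp: norm_exp_eq_Re)
qed

lemma norm_Ech_ge2:
  assumes "\<bar>Im u\<bar> \<le> \<theta>" "\<theta> \<le> pi/2"
  shows "cos \<theta> * exp \<bar>Re u\<bar> \<le> norm (Ech u)"
proof -
  have e: "Re (Ech u) = cos (Im u) * (exp (Re u) + exp (- Re u))"
    unfolding Ech_def by (simp add: Re_exp algebra_simps)
  have c1: "cos \<theta> \<le> cos (Im u)"
    using assms by (subst cos_abs_real[symmetric]) (intro cos_monotone_0_pi_le, auto)
  have c0: "cos \<theta> \<ge> 0" using assms by (intro cos_ge_zero) auto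
  have c2: "exp \<bar>Re u\<bar> \<le> exp (Re u) + exp (- Re u)" by (cases "Re u \<ge> 0") auto
  have "cos \<theta> * exp \<bar>Re u\<bar> \<le> cos (Im u) * (exp (Re u) + exp (- Re u))"
    by (rule mult_mono[OF c1 c2]) (use c0 c1 in auto)
  then have "cos \<theta> * exp \<bar>Re u\<bar> \<le> Re (Ech u)" using e by simp
  then show ?thesis using complex_Re_le_cmod order_trans by blast
qed

lemma Ech_neg [simp]: "Ech (-u) = Ech u" unfolding Ech_def by simp

lemma Ech_shift_pi: "Ech (u + \<i> * of_real pi) = - Ech u"
proof -
  have 1: "exp (u + \<i> * of_real pi) = - exp u" by (simp add: exp_add)
  have 2: "exp (-(u + \<i> * of_real pi)) = - exp (-u)"
    by (simp only: minus_add_distrib diff_conv_add_uminus[symmetric] exp_diff exp_pi_i') simp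
  show ?thesis unfolding Ech_def 1 2 by simp
qed

lemma Ech_zero_strip:
  assumes "Ech u = 0" "0 \<le> Im u" "Im u \<le> pi"
  shows "u = \<i> * of_real (pi/2)"
proof -
  from assms(1) have e: "exp u = - exp (-u)" unfolding Ech_def by (metis add_eq_0_iff minus_minus)
  have "exp (2*u) = exp u * exp u" by (simp only: mult_2 exp_add)
  also have "\<dots> = - (exp (-u) * exp u)" using e by (metis mult.commute mult_minus_right)
  also have "\<dots> = -1" by (metis exp_minus_inverse mult.commute)
  finally have "exp (2*u) = -1" .
  then have "exp (2*u - \<i> * of_real pi) = 1" by (simp only: exp_diff exp_pi_i') simp
  then obtain n :: int where r0: "Re (2*u - \<i> * of_real pi) = 0" and i0: "Im (2*u - \<i> * of_real pi) = of_int (2 * n) * pi"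
    unfolding exp_eq_1 by blast
  from r0 have r: "Re u = 0" by simp
  from i0 have i: "2 * Im u - pi = 2 * pi * n" by simp
  have "n = 0"
  proof (rule ccontr)
    assume "n \<noteq> 0"
    then consider "n \<ge> 1" | "n \<le> -1" by linarith
    then show False
    proof cases
      case 1
      then have "2 * pi * 1 \<le> 2 * pi * n" by (intro mult_left_mono) auto
      then show False using i assms(3) pi_gt_zero by linarith
    next
      case 2
      then have "2 * pi * n \<le> 2 * pi * (-1)" by (intro mult_left_mono) auto
      then show False using i assms(2) pi_gt_zero by linarith
    qed
  qed
  with i r show ?thesis by (simp add: complex_eq_iff)
qed

lemma Ech_nonzero_narrow:
  assumes "\<bar>Im u\<bar> < pi/2" shows "Ech u \<noteq> 0"
proof -
  have "cos \<bar>Im u\<bar> * exp \<bar>Re u\<bar> \<le> norm (Ech u)" by (rule norm_Ech_ge2) (use assms in auto)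
  moreover have "cos \<bar>Im u\<bar> > 0" using assms by (intro cos_gt_zero_pi) auto
  ultimately show ?thesis by (metis exp_gt_zero mult_pos_pos norm_zero not_le)
qed

lemma holomorphic_Ech [holomorphic_intros]:
  "f holomorphic_on S \<Longrightarrow> (\<lambda>z. Ech (f z)) holomorphic_on S"
  unfolding Ech_def by (intro holomorphic_intros)

lemma continuous_on_Ech [continuous_intros]:
  "continuous_on S f \<Longrightarrow> continuous_on S (\<lambda>z. Ech (f z))"
  unfolding Ech_def by (intro continuous_intros)

definition Pk :: "real \<Rightarrow> complex \<Rightarrow> complex" where
  "Pk a z = 1 / (2 * of_real a * Ech (of_real pi * z / (2 * of_real a)))"

lemma exp_i_pi_half: "exp (\<i> * of_real (pi/2)) = \<i>"
  by (metis cis_conv_exp cis_pi_half)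

lemma exp_i_pi_half': "exp (\<i> * of_real pi / 2) = \<i>"
  using exp_i_pi_half by simp

lemma exp_ge_2_if: "1 \<le> x \<Longrightarrow> 2 \<le> exp (x::real)"
  using exp_ge_add_one_self[of x] by linarith

lemma Ech_lower_far:
  assumes "1 \<le> \<bar>Re u\<bar>"
  shows "exp \<bar>Re u\<bar> / 2 \<le> norm (Ech u)"
proof -
  have "exp (-\<bar>Re u\<bar>) \<le> 1" by simp
  moreover have "2 \<le> exp \<bar>Re u\<bar>" using exp_ge_2_if assms by blast
  ultimately show ?thesis using norm_Ech_ge1[of u] by linarith
qed

lemma fourier_sech:
  fixes a \<beta> v :: real
  assumes a: "a > 0" and \<beta>: "\<bar>\<beta>\<bar> < a"
  defines "h \<equiv> \<lambda>k::complex. exp (\<i> * k * of_real v) * exp (of_real \<beta> * k) / Ech (of_real a * k)"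
  shows "integrable lborel (\<lambda>t. h (of_real t))"
    "(LINT t|lborel. h (of_real t)) = 2 * of_real pi * Pk a (of_real v - \<i> * of_real \<beta>)"
proof -
  define d where "d = pi / a"
  have d: "d > 0" using a by (simp add: d_def)
  define k0 where "k0 = \<i> * of_real (pi / (2*a))"
  define B where "B = 2 * exp (\<bar>v\<bar> * d)"
  define \<alpha> where "\<alpha> = a - \<bar>\<beta>\<bar>"
  have \<alpha>: "\<alpha> > 0" using \<beta> by (simp add: \<alpha>_def)
  have nh: "norm (h k) = exp (- v * Im k) * exp (\<beta> * Re k) / norm (Ech (of_real a * k))" for k
    unfolding h_def by (simp add: norm_divide norm_mult norm_exp_eq_Re)
  have num: "exp (- v * Im k) * exp (\<beta> * Re k) \<le> exp (\<bar>v\<bar> * d) * exp (\<bar>\<beta>\<bar> * \<bar>Re k\<bar>)"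
    if "0 \<le> Im k" "Im k \<le> d" for k
  proof (intro mult_mono)
    have "- v * Im k \<le> \<bar>v\<bar> * d"
      using that by (smt (verit, best) mult_left_mono mult_minus_left abs_ge_minus_self abs_ge_zero mult_right_mono)
    then show "exp (- v * Im k) \<le> exp (\<bar>v\<bar> * d)" by simp
    have "\<beta> * Re k \<le> \<bar>\<beta>\<bar> * \<bar>Re k\<bar>" by (metis abs_ge_self abs_mult)
    then show "exp (\<beta> * Re k) \<le> exp (\<bar>\<beta>\<bar> * \<bar>Re k\<bar>)" by simp
  qed auto
  have expalg: "exp (\<bar>\<beta>\<bar> * x) / exp (a * x) = exp (-\<alpha> * x)" for x
    by (simp add: \<alpha>_def exp_diff[symmetric] algebra_simps)
  have bound_gen: "norm (h k) \<le> B * exp (-\<alpha> * \<bar>Re k\<bar>)"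
    if "0 \<le> Im k" "Im k \<le> d" "exp (a * \<bar>Re k\<bar>) / 2 \<le> norm (Ech (of_real a * k))" for k
  proof -
    have pos: "0 < exp (a * \<bar>Re k\<bar>) / 2" by simp
    have "norm (h k) \<le> exp (\<bar>v\<bar> * d) * exp (\<bar>\<beta>\<bar> * \<bar>Re k\<bar>) / (exp (a * \<bar>Re k\<bar>) / 2)"
      unfolding nh by (rule frac_le) (use num[OF that(1,2)] that(3) pos in auto)
    also have "\<dots> = B * (exp (\<bar>\<beta>\<bar> * \<bar>Re k\<bar>) / exp (a * \<bar>Re k\<bar>))"
      by (simp add: B_def)
    also have "\<dots> = B * exp (-\<alpha> * \<bar>Re k\<bar>)" by (simp only: expalg)
    finally show ?thesis .
  qed
  have lower: "exp (a * \<bar>Re k\<bar>) / 2 \<le> norm (Ech (of_real a * k))"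
    if hk: "Im k = 0 \<or> Im k = d \<or> 1/a \<le> \<bar>Re k\<bar>" for k
  proof -
    have rak: "\<bar>Re (of_real a * k)\<bar> = a * \<bar>Re k\<bar>" using a by (simp add: abs_mult)
    consider "Im k = 0" | "Im k = d" | "1/a \<le> \<bar>Re k\<bar>" using hk by blast
    then show ?thesis
    proof cases
      case 1
      have "cos 0 * exp \<bar>Re (of_real a * k)\<bar> \<le> norm (Ech (of_real a * k))"
        by (rule norm_Ech_ge2) (use 1 in auto)
      then have "exp (a * \<bar>Re k\<bar>) \<le> norm (Ech (of_real a * k))" using rak by simp
      then show ?thesis using exp_gt_zero[of "a * \<bar>Re k\<bar>"] by linarith
    next
      case 2
      define u where "u = of_real a * k - \<i> * of_real pi"
      have "Ech (of_real a * k) = - Ech u" unfolding u_def using Ech_shift_pi[of "of_real a * k - \<i> * of_real pi"] by simp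
      moreover have "cos 0 * exp \<bar>Re u\<bar> \<le> norm (Ech u)"
        by (rule norm_Ech_ge2) (use 2 a in \<open>auto simp: u_def d_def\<close>)
      moreover have "\<bar>Re u\<bar> = a * \<bar>Re k\<bar>" using rak by (simp add: u_def)
      ultimately have "exp (a * \<bar>Re k\<bar>) \<le> norm (Ech (of_real a * k))" by simp
      then show ?thesis using exp_gt_zero[of "a * \<bar>Re k\<bar>"] by linarith
    next
      case 3
      have "1 \<le> \<bar>Re (of_real a * k)\<bar>" using 3 a rak by (simp add: field_simps)
      from Ech_lower_far[OF this] show ?thesis using rak by simp
    qed
  qed
  have Enz: "Ech (of_real a * k) \<noteq> 0" if "Im k = 0 \<or> Im k = d \<or> 1/a \<le> \<bar>Re k\<bar>" for k
    using lower[OF that] by (metis divide_pos_pos exp_gt_zero norm_zero not_le zero_less_numeral)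
  have conth: "continuous_on S h" if "\<And>k. k \<in> S \<Longrightarrow> Im k = 0 \<or> Im k = d \<or> 1/a \<le> \<bar>Re k\<bar>" for S
    unfolding h_def by (intro continuous_intros) (use Enz that in auto)
  define Dk where "Dk = (\<lambda>k. Ech (of_real a * k))"
  define Nk where "Nk = (\<lambda>k. exp (\<i> * k * of_real v) * exp (of_real \<beta> * k))"
  define G where "G = (\<lambda>k. if k = k0 then deriv Dk k0 else (Dk k - Dk k0) / (k - k0))"
  have holD: "Dk holomorphic_on UNIV" unfolding Dk_def by (intro holomorphic_intros)
  have holG: "G holomorphic_on UNIV"
    unfolding G_def by (rule pole_lemma[OF holD]) simp
  have ak0: "of_real a * k0 = \<i> * of_real (pi/2)" using a by (simp add: k0_def field_simps)
  have Dk0: "Dk k0 = 0"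
    unfolding Dk_def Ech_def ak0 using exp_i_pi_half by (simp add: exp_minus field_simps)
  have "(Dk has_field_derivative (of_real a * (exp (of_real a * k0) - exp (-(of_real a * k0))))) (at k0)"
    unfolding Dk_def Ech_def by (auto intro!: derivative_eq_intros simp: algebra_simps)
  then have dDk: "deriv Dk k0 = 2 * of_real a * \<i>"
  proof -
    have "(Dk has_field_derivative (of_real a * (2 * \<i>))) (at k0)"
      using \<open>(Dk has_field_derivative _) (at k0)\<close> unfolding ak0 exp_i_pi_half by (simp add: exp_minus exp_i_pi_half')
    then show ?thesis by (simp add: DERIV_imp_deriv)
  qed
  have Gk0: "G k0 = 2 * of_real a * \<i>" by (simp add: G_def dDk)
  have Gnz: "G k \<noteq> 0" if "0 \<le> Im k" "Im k \<le> d" for k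
  proof (cases "k = k0")
    case True then show ?thesis using Gk0 a by simp
  next
    case False
    have "Dk k \<noteq> 0"
    proof
      assume "Dk k = 0"
      then have "of_real a * k = \<i> * of_real (pi/2)"
        unfolding Dk_def by (rule Ech_zero_strip) (use that a in \<open>auto simp: d_def field_simps\<close>)
      then have "k = k0" using a unfolding k0_def by (simp add: field_simps)
      with False show False by simp
    qed
    then show ?thesis using False by (simp add: G_def Dk0)
  qed
  define J where "J = 2 * of_real pi * \<i> * (Nk k0 / G k0)"
  have rect: "(h has_contour_integral J) (rectpath (Complex (-T) 0) (Complex T d))" if T: "1/a < T" for T
  proof -
    have T0: "T > 0" using T a by (smt (verit) divide_pos_pos)
    define S where "S = cbox (Complex (-T) 0) (Complex T d)"
    have inS: "0 \<le> Im k \<and> Im k \<le> d" if "k \<in> S" for k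
      using that by (auto simp: S_def in_cbox_complex_iff)
    have holF: "(\<lambda>k. Nk k / G k) holomorphic_on S"
      unfolding Nk_def by (intro holomorphic_intros holomorphic_on_subset[OF holG]) (use Gnz inS in auto)
    have k0in: "k0 \<in> box (Complex (-T) 0) (Complex T d)"
      using T0 a by (auto simp: k0_def in_box_complex_iff d_def field_simps)
    have intS: "interior S = box (Complex (-T) 0) (Complex T d)" by (simp add: S_def interior_cbox)
    have pimg: "path_image (rectpath (Complex (-T) 0) (Complex T d)) = S - box (Complex (-T) 0) (Complex T d)"
      unfolding S_def by (rule path_image_rectpath_cbox_minus_box) (use T0 d in auto)
    have "((\<lambda>w. Nk w / G w / (w - k0)) has_contour_integral
            (2 * pi * \<i> * winding_number (rectpath (Complex (-T) 0) (Complex T d)) k0 * (Nk k0 / G k0)))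
           (rectpath (Complex (-T) 0) (Complex T d))"
    proof (rule Cauchy_integral_formula_weak[where k = "{}"])
      show "convex S" by (simp add: S_def)
      show "continuous_on S (\<lambda>k. Nk k / G k)" using holF by (rule holomorphic_on_imp_continuous_on)
      fix x assume "x \<in> interior S - {}"
      then show "(\<lambda>k. Nk k / G k) field_differentiable at x"
        using holomorphic_on_imp_differentiable_at[OF holomorphic_on_subset[OF holF interior_subset]] by auto
    next
      show "k0 \<in> interior S - {}" using k0in intS by simp
      show "path_image (rectpath (Complex (-T) 0) (Complex T d)) \<subseteq> S - {k0}" using pimg k0in by auto
    qed auto
    moreover have "winding_number (rectpath (Complex (-T) 0) (Complex T d)) k0 = 1"
      by (rule winding_number_rectpath[OF k0in])
    ultimately have *: "((\<lambda>w. Nk w / G w / (w - k0)) has_contour_integral J) (rectpath (Complex (-T) 0) (Complex T d))"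
      by (simp add: J_def)
    show ?thesis
    proof (rule has_contour_integral_eq[OF *])
      fix w assume "w \<in> path_image (rectpath (Complex (-T) 0) (Complex T d))"
      then have "w \<noteq> k0" "w \<in> S" using pimg k0in by auto
      then show "Nk w / G w / (w - k0) = h w"
        using Dk0 by (simp add: G_def h_def Nk_def Dk_def)
    qed
  qed
  have bndall: "norm (h k) \<le> B * exp (-\<alpha> * \<bar>Re k\<bar>)"
    if "0 \<le> Im k" "Im k \<le> d" "Im k = 0 \<or> Im k = d \<or> 1/a \<le> \<bar>Re k\<bar>" for k
    by (rule bound_gen[OF that(1,2) lower[OF that(3)]])
  have p1: "continuous_on {z. Im z = 0} h" "continuous_on {z. Im z = d} h"
      "continuous_on {z. 1/a \<le> \<bar>Re z\<bar> \<and> 0 \<le> Im z \<and> Im z \<le> d} h"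
    by (rule conth; simp)+
  have p2: "norm (h (Complex t 0)) \<le> B * exp (-\<alpha> * \<bar>t\<bar>)" for t
    using bndall[of "Complex t 0"] d by simp
  have p3: "norm (h (Complex t d)) \<le> B * exp (-\<alpha> * \<bar>t\<bar>)" for t
    using bndall[of "Complex t d"] d by simp
  have p4: "norm (h z) \<le> B * exp (-\<alpha> * \<bar>Re z\<bar>)" if "1/a \<le> \<bar>Re z\<bar>" "0 \<le> Im z" "Im z \<le> d" for z
    using bndall[of z] that by simp
  have p0: "(0::real) < d" "0 < \<alpha>" "0 \<le> 1/a" using d \<alpha> a by auto
  note ss = strip_shift[OF p0 p1 p2 p3 p4 rect]
  have c0: "Complex t 0 = of_real t" for t by (simp add: complex_of_real_def)
  show "integrable lborel (\<lambda>t. h (of_real t))" using ss(1) by (simp add: c0)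
  define c where "c = pi / (2*a)"
  define w0 where "w0 = of_real c * (\<i> * of_real \<beta> - of_real v)"
  define q where "q = exp (2 * w0)"
  have dc: "d = 2 * c" by (simp add: d_def c_def)
  have hd: "h (Complex t d) = - q * h (of_real t)" for t
  proof -
    have ad: "of_real a * Complex t d = of_real (a * t) + \<i> * of_real pi"
      using a by (simp add: Complex_eq d_def field_simps)
    have e1: "exp (\<i> * Complex t d * of_real v) = exp (\<i> * of_real t * of_real v) * exp (- of_real (d * v))"
      by (simp add: Complex_eq exp_add[symmetric] algebra_simps)
    have e2: "exp (of_real \<beta> * Complex t d) = exp (of_real \<beta> * of_real t) * exp (\<i> * of_real (\<beta> * d))"
      by (simp add: Complex_eq exp_add[symmetric] algebra_simps)
    have e3: "exp (- of_real (d * v)) * exp (\<i> * of_real (\<beta> * d)) = q"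
      by (simp add: q_def w0_def dc exp_add[symmetric] algebra_simps)
    have "h (Complex t d) = exp (\<i> * of_real t * of_real v) * exp (of_real \<beta> * of_real t) *
            (exp (- of_real (d * v)) * exp (\<i> * of_real (\<beta> * d))) / (- Ech (of_real a * of_real t))"
      unfolding h_def e1 e2 ad Ech_shift_pi by (simp add: algebra_simps)
    also have "\<dots> = - q * h (of_real t)" unfolding e3 h_def by (simp add: field_simps)
    finally show ?thesis .
  qed
  define I where "I = (LINT t|lborel. h (of_real t))"
  have "(LINT t|lborel. h (Complex t d)) = - q * I"
    unfolding hd I_def by simp
  with ss(3) have IJ: "I * (1 + q) = J" by (simp add: c0 I_def[symmetric] algebra_simps)
  have Nk0: "Nk k0 = exp w0"
    by (simp add: Nk_def k0_def w0_def c_def exp_add[symmetric] algebra_simps diff_divide_distrib)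
  have Ew0: "Ech w0 \<noteq> 0"
  proof (rule Ech_nonzero_narrow)
    have "\<bar>Im w0\<bar> = c * \<bar>\<beta>\<bar>" using a by (simp add: w0_def c_def abs_mult)
    also have "\<dots> < c * a" using \<beta> a by (intro mult_strict_left_mono) (auto simp: c_def)
    also have "\<dots> = pi/2" using a by (simp add: c_def)
    finally show "\<bar>Im w0\<bar> < pi/2" .
  qed
  have q1: "1 + q = exp w0 * Ech w0"
  proof -
    have "exp w0 * Ech w0 = exp w0 * exp w0 + exp w0 * exp (-w0)" by (simp add: Ech_def distrib_left)
    also have "exp w0 * exp w0 = q" by (simp only: q_def mult_2 exp_add)
    also have "exp w0 * exp (-w0) = 1" by (rule exp_minus_inverse)
    finally show ?thesis by (simp add: add.commute)
  qed
  have q1nz: "1 + q \<noteq> 0" using Ew0 q1 by simp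
  have Parg: "of_real pi * (of_real v - \<i> * of_real \<beta>) / (2 * of_real a) = - w0"
  proof -
    have "- w0 = of_real c * (of_real v - \<i> * of_real \<beta>)" by (simp add: w0_def algebra_simps)
    moreover have "(of_real c :: complex) = of_real pi / (2 * of_real a)" by (simp add: c_def)
    ultimately show ?thesis by simp
  qed
  have "2 * of_real pi * Pk a (of_real v - \<i> * of_real \<beta>) * (1 + q) = J"
    unfolding Pk_def Parg Ech_neg J_def Nk0 Gk0 q1 using a Ew0
    by (simp add: field_simps)
  then have "I * (1 + q) = 2 * of_real pi * Pk a (of_real v - \<i> * of_real \<beta>) * (1 + q)"
    using IJ by simp
  then show "(LINT t|lborel. h (of_real t)) = 2 * of_real pi * Pk a (of_real v - \<i> * of_real \<beta>)"
    using q1nz unfolding I_def by simp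
qed

lemma kernel_eq:
  assumes a: "a > 0" and b: "0 \<le> b" "b < a"
  shows "kernel a b x = Pk a (of_real x - \<i> * of_real b) + Pk a (of_real x + \<i> * of_real b)"
proof -
  define h where "h \<beta> = (\<lambda>k::complex. exp (\<i> * k * of_real x) * exp (of_real \<beta> * k) / Ech (of_real a * k))" for \<beta> :: real
  have F1: "integrable lborel (\<lambda>t. h b (of_real t))"
      "(LINT t|lborel. h b (of_real t)) = 2 * of_real pi * Pk a (of_real x - \<i> * of_real b)"
    using fourier_sech[of a b x] a b unfolding h_def by auto
  have F2: "integrable lborel (\<lambda>t. h (-b) (of_real t))"
      "(LINT t|lborel. h (-b) (of_real t)) = 2 * of_real pi * Pk a (of_real x - \<i> * of_real (-b))"
    using fourier_sech[of a "-b" x] a b unfolding h_def by auto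
  have pt: "exp (\<i> * of_real (t * x)) * of_real (cosh (b * t) / cosh (a * t)) = h b (of_real t) + h (-b) (of_real t)" for t
  proof -
    have r: "cosh (b * t) / cosh (a * t) = (exp (b*t) + exp (-(b*t))) / (exp (a*t) + exp (-(a*t)))"
    proof -
      have "(exp (a*t) + exp (-(a*t))) > 0" by (intro add_pos_pos) auto
      then show ?thesis unfolding cosh_def by (simp add: field_simps)
    qed
    have "of_real (cosh (b * t) / cosh (a * t)) = (of_real (exp (b*t) + exp (-(b*t))) :: complex) / of_real (exp (a*t) + exp (-(a*t)))"
      unfolding r by simp
    also have "\<dots> = (exp (of_real b * of_real t) + exp (- (of_real b * of_real t))) / Ech (of_real a * of_real t)"
      unfolding Ech_def by (simp flip: exp_of_real)
    finally show ?thesis unfolding h_def by (simp add: add_divide_distrib distrib_left mult.assoc)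
  qed
  have "kernel a b x = of_real (1 / (2 * pi)) * (LINT t|lborel. h b (of_real t) + h (-b) (of_real t))"
    unfolding kernel_def pt ..
  also have "\<dots> = of_real (1 / (2 * pi)) * ((LINT t|lborel. h b (of_real t)) + (LINT t|lborel. h (-b) (of_real t)))"
    using F1(1) F2(1) by simp
  also have "\<dots> = Pk a (of_real x - \<i> * of_real b) + Pk a (of_real x + \<i> * of_real b)"
    unfolding F1(2) F2(2) by (simp add: field_simps)
  finally show ?thesis .
qed

lemma Pk_bound_narrow:
  assumes a: "a > 0" and b: "b < a" and z: "\<bar>Im z\<bar> \<le> b"
  shows "norm (Pk a z) \<le> 1 / (2 * a * cos (pi * b / (2 * a))) * exp (- (pi / (2 * a)) * \<bar>Re z\<bar>)"
proof -
  define u where "u = of_real pi * z / (2 * of_real a)"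
  have Reu: "\<bar>Re u\<bar> = pi / (2 * a) * \<bar>Re z\<bar>" and Imu: "\<bar>Im u\<bar> = pi / (2 * a) * \<bar>Im z\<bar>"
    using a by (simp_all add: u_def abs_mult)
  have "pi / (2 * a) * \<bar>Im z\<bar> \<le> pi / (2 * a) * b" using z a by (intro mult_left_mono) auto
  then have th: "\<bar>Im u\<bar> \<le> pi * b / (2 * a)" unfolding Imu by simp
  have b0: "0 \<le> b" using abs_ge_zero[of "Im z"] z by linarith
  have ba: "b / a < 1" using a b by simp
  have eq: "pi * b / (2 * a) = (pi / 2) * (b / a)" by simp
  have lt: "pi * b / (2 * a) < pi / 2"
    unfolding eq using mult_strict_left_mono[OF ba, of "pi/2"] by simp
  then have th2: "pi * b / (2 * a) \<le> pi / 2" by simp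
  have ge0: "0 \<le> pi * b / (2 * a)" using a b0 by simp
  have cpos: "cos (pi * b / (2 * a)) > 0"
    by (rule cos_gt_zero_pi) (use lt ge0 pi_gt_zero in linarith)+
  have lo: "cos (pi * b / (2 * a)) * exp \<bar>Re u\<bar> \<le> norm (Ech u)"
    by (rule norm_Ech_ge2[OF th th2])
  have pos: "0 < cos (pi * b / (2 * a)) * exp \<bar>Re u\<bar>" using cpos by simp
  have "norm (Pk a z) = 1 / (2 * a * norm (Ech u))"
    using a by (simp add: Pk_def u_def norm_divide norm_mult)
  also have "\<dots> \<le> 1 / (2 * a * (cos (pi * b / (2 * a)) * exp \<bar>Re u\<bar>))"
  proof (rule divide_left_mono)
    show "2 * a * (cos (pi * b / (2 * a)) * exp \<bar>Re u\<bar>) \<le> 2 * a * norm (Ech u)"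
      using lo a by simp
    have "0 < 2 * a * (cos (pi * b / (2 * a)) * exp \<bar>Re u\<bar>)" using pos a by simp
    moreover have "0 < norm (Ech u)" using pos lo by linarith
    then have "0 < 2 * a * norm (Ech u)" using a by simp
    ultimately show "0 < 2 * a * norm (Ech u) * (2 * a * (cos (pi * b / (2 * a)) * exp \<bar>Re u\<bar>))"
      by (metis mult_pos_pos mult.commute)
  qed simp
  also have "\<dots> = 1 / (2 * a * cos (pi * b / (2 * a))) * exp (- (pi / (2 * a)) * \<bar>Re z\<bar>)"
  proof -
    have "exp (- (pi / (2 * a)) * \<bar>Re z\<bar>) = 1 / exp \<bar>Re u\<bar>"
      unfolding Reu by (simp add: exp_minus inverse_eq_divide)
    then show ?thesis by simp
  qed
  finally show ?thesis .
qed

lemma Pk_bound_far: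
  assumes a: "a > 0" and z: "2 * a / pi \<le> \<bar>Re z\<bar>"
  shows "norm (Pk a z) \<le> 1 / a * exp (- (pi / (2 * a)) * \<bar>Re z\<bar>)"
proof -
  define u where "u = of_real pi * z / (2 * of_real a)"
  have Reu: "\<bar>Re u\<bar> = pi / (2 * a) * \<bar>Re z\<bar>"
    using a by (simp_all add: u_def abs_mult)
  have "1 \<le> \<bar>Re u\<bar>"
  proof -
    have "pi / (2 * a) * (2 * a / pi) \<le> pi / (2 * a) * \<bar>Re z\<bar>"
      using z a by (intro mult_left_mono) auto
    then show ?thesis unfolding Reu using a by simp
  qed
  from Ech_lower_far[OF this] have lo: "exp \<bar>Re u\<bar> / 2 \<le> norm (Ech u)" .
  have "norm (Pk a z) = 1 / (2 * a * norm (Ech u))"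
    using a by (simp add: Pk_def u_def norm_divide norm_mult)
  also have "\<dots> \<le> 1 / (2 * a * (exp \<bar>Re u\<bar> / 2))"
  proof (rule divide_left_mono)
    show "2 * a * (exp \<bar>Re u\<bar> / 2) \<le> 2 * a * norm (Ech u)"
      using lo a by simp
    have "0 < 2 * a * (exp \<bar>Re u\<bar> / 2)" using a by simp
    moreover have "0 < norm (Ech u)" using lo exp_gt_zero[of "\<bar>Re u\<bar>"] by linarith
    then have "0 < 2 * a * norm (Ech u)" using a by simp
    ultimately show "0 < 2 * a * norm (Ech u) * (2 * a * (exp \<bar>Re u\<bar> / 2))"
      by (metis mult_pos_pos mult.commute)
  qed simp
  also have "\<dots> = 1 / a * exp (- (pi / (2 * a)) * \<bar>Re z\<bar>)"
  proof -
    have "exp (- (pi / (2 * a)) * \<bar>Re z\<bar>) = 1 / exp \<bar>Re u\<bar>"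
      unfolding Reu by (simp add: exp_minus inverse_eq_divide)
    then show ?thesis by simp
  qed
  finally show ?thesis .
qed

lemma Pk_Ech_nz: "a > 0 \<Longrightarrow> \<bar>Im z\<bar> < a \<Longrightarrow> Ech (of_real pi * z / (2 * of_real a)) \<noteq> 0"
  by (rule Ech_nonzero_narrow) (simp add: abs_mult field_simps)

lemma holomorphic_Pk:
  assumes "g holomorphic_on S" "\<And>z. z \<in> S \<Longrightarrow> Ech (of_real pi * g z / (2 * of_real a)) \<noteq> 0" "a > 0"
  shows "(\<lambda>z. Pk a (g z)) holomorphic_on S"
  unfolding Pk_def using assms by (intro holomorphic_intros) auto

lemma continuous_Pk:
  assumes "continuous_on S g" "\<And>z. z \<in> S \<Longrightarrow> Ech (of_real pi * g z / (2 * of_real a)) \<noteq> 0" "a > 0"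
  shows "continuous_on S (\<lambda>z. Pk a (g z))"
  unfolding Pk_def using assms by (intro continuous_intros) auto

lemma Pk_shift: "Pk a (z + 2 * \<i> * of_real a) = - Pk a z" if "a > 0"
proof -
  have "of_real pi * (z + 2 * \<i> * of_real a) / (2 * of_real a) = of_real pi * z / (2 * of_real a) + \<i> * of_real pi"
    using that by (simp add: field_simps)
  then show ?thesis unfolding Pk_def by (simp add: Ech_shift_pi)
qed

lemma exp_shift_bound:
  fixes \<gamma> v x :: real
  assumes "\<gamma> \<ge> 0"
  shows "exp (- \<gamma> * \<bar>v - x\<bar>) \<le> exp (\<gamma> * \<bar>v\<bar>) * exp (- \<gamma> * \<bar>x\<bar>)"
proof -
  have "\<bar>x\<bar> - \<bar>v\<bar> \<le> \<bar>v - x\<bar>" by (rule abs_triangle_ineq2_sym)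
  then have "\<gamma> * (\<bar>x\<bar> - \<bar>v\<bar>) \<le> \<gamma> * \<bar>v - x\<bar>" using assms by (rule mult_left_mono)
  then have "- \<gamma> * \<bar>v - x\<bar> \<le> \<gamma> * \<bar>v\<bar> + - \<gamma> * \<bar>x\<bar>" by (simp add: algebra_simps)
  then show ?thesis by (simp only: exp_add[symmetric] exp_le_cancel_iff)
qed

lemma shift_gen:
  fixes \<Lambda> :: "complex \<Rightarrow> complex" and v e a b c d M :: real
  assumes a: "a > 0" and cd: "c < d" and b: "b < a"
    and hol: "\<Lambda> holomorphic_on {z. c \<le> Im z \<and> Im z \<le> d}"
    and bnd: "\<And>z. c \<le> Im z \<Longrightarrow> Im z \<le> d \<Longrightarrow> norm (\<Lambda> z) \<le> M"
    and nar: "\<And>y. c \<le> y \<Longrightarrow> y \<le> d \<Longrightarrow> \<bar>e - y\<bar> \<le> b"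
  defines "f \<equiv> \<lambda>w. Pk a (of_real v - w + \<i> * of_real e) * \<Lambda> w"
  shows "integrable lborel (\<lambda>t. f (Complex t c))" "integrable lborel (\<lambda>t. f (Complex t d))"
    "(LINT t|lborel. f (Complex t c)) = (LINT t|lborel. f (Complex t d))"
proof -
  define \<Sigma> where "\<Sigma> = {z. c \<le> Im z \<and> Im z \<le> d}"
  define \<gamma> where "\<gamma> = pi / (2 * a)"
  have \<gamma>: "\<gamma> > 0" using a by (simp add: \<gamma>_def)
  define K where "K = 1 / (2 * a * cos (pi * b / (2 * a)))"
  have "norm (\<Lambda> (Complex 0 c)) \<le> M" using bnd[of "Complex 0 c"] cd by simp
  then have M0: "0 \<le> M" using norm_ge_zero[of "\<Lambda> (Complex 0 c)"] by linarith
  have b0: "b \<ge> 0" using nar[of c] cd abs_ge_zero[of "e - c"] by linarith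
  have "cos (pi * b / (2 * a)) \<ge> 0"
  proof (rule cos_ge_zero)
    have "0 \<le> pi * b / (2 * a)" using a b0 by simp
    then show "- (pi / 2) \<le> pi * b / (2 * a)" using pi_gt_zero by linarith
    have "b / a \<le> 1" using a b by simp
    then have "pi / 2 * (b / a) \<le> pi / 2 * 1" by (intro mult_left_mono) auto
    then show "pi * b / (2 * a) \<le> pi / 2" by simp
  qed
  then have K0: "0 \<le> K" using a by (simp add: K_def)
  have imarg: "Im (of_real v - w + \<i> * of_real e) = e - Im w" for w by simp
  have nz: "Ech (of_real pi * (of_real v - w + \<i> * of_real e) / (2 * of_real a)) \<noteq> 0" if "w \<in> \<Sigma>" for w
    by (rule Pk_Ech_nz[OF a]) (use nar[of "Im w"] that b in \<open>auto simp: \<Sigma>_def\<close>)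
  have holf: "f holomorphic_on \<Sigma>"
    unfolding f_def using hol unfolding \<Sigma>_def[symmetric]
    by (intro holomorphic_intros holomorphic_Pk nz a) auto
  have contf: "continuous_on \<Sigma> f" using holf by (rule holomorphic_on_imp_continuous_on)
  have bndf: "norm (f w) \<le> K * exp (\<gamma> * \<bar>v\<bar>) * M * exp (- \<gamma> * \<bar>Re w\<bar>)" if "w \<in> \<Sigma>" for w
  proof -
    have "norm (Pk a (of_real v - w + \<i> * of_real e)) \<le> K * exp (- \<gamma> * \<bar>Re (of_real v - w + \<i> * of_real e)\<bar>)"
      unfolding K_def \<gamma>_def by (rule Pk_bound_narrow[OF a b]) (use nar[of "Im w"] that in \<open>auto simp: \<Sigma>_def\<close>)
    also have "\<dots> = K * exp (- \<gamma> * \<bar>v - Re w\<bar>)" by simp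
    also have "\<dots> \<le> K * (exp (\<gamma> * \<bar>v\<bar>) * exp (- \<gamma> * \<bar>Re w\<bar>))"
    proof (rule mult_left_mono)
      show "exp (- \<gamma> * \<bar>v - Re w\<bar>) \<le> exp (\<gamma> * \<bar>v\<bar>) * exp (- \<gamma> * \<bar>Re w\<bar>)"
        by (rule exp_shift_bound) (use \<gamma> in simp)
      show "0 \<le> K" by (rule K0)
    qed
    finally have P: "norm (Pk a (of_real v - w + \<i> * of_real e)) \<le> K * exp (\<gamma> * \<bar>v\<bar>) * exp (- \<gamma> * \<bar>Re w\<bar>)"
      by (simp add: mult.assoc)
    have L: "norm (\<Lambda> w) \<le> M" using bnd that by (auto simp: \<Sigma>_def)
    have "norm (f w) = norm (Pk a (of_real v - w + \<i> * of_real e)) * norm (\<Lambda> w)"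
      by (simp add: f_def norm_mult)
    also have "\<dots> \<le> (K * exp (\<gamma> * \<bar>v\<bar>) * exp (- \<gamma> * \<bar>Re w\<bar>)) * M"
      by (rule mult_mono[OF P L]) (use K0 in auto)
    finally show ?thesis by (simp add: algebra_simps)
  qed
  have rect: "(f has_contour_integral 0) (rectpath (Complex (-T) c) (Complex T d))" if "0 < T" for T
  proof (rule Cauchy_theorem_convex_simple)
    have sub: "cbox (Complex (-T) c) (Complex T d) \<subseteq> \<Sigma>" by (auto simp: \<Sigma>_def in_cbox_complex_iff)
    show "f holomorphic_on cbox (Complex (-T) c) (Complex T d)" using holomorphic_on_subset[OF holf sub] .
    show "path_image (rectpath (Complex (-T) c) (Complex T d)) \<subseteq> cbox (Complex (-T) c) (Complex T d)"
      by (rule path_image_rectpath_subset_cbox) (use that cd in auto)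
  qed auto
  have cs: "continuous_on S f" if "S \<subseteq> \<Sigma>" for S using continuous_on_subset[OF contf that] .
  have c1: "continuous_on {z. Im z = c} f" "continuous_on {z. Im z = d} f"
    "continuous_on {z. 0 \<le> \<bar>Re z\<bar> \<and> c \<le> Im z \<and> Im z \<le> d} f"
    by (rule cs; use cd in \<open>auto simp: \<Sigma>_def\<close>)+
  have b1: "norm (f (Complex t c)) \<le> K * exp (\<gamma> * \<bar>v\<bar>) * M * exp (- \<gamma> * \<bar>t\<bar>)" for t
    using bndf[of "Complex t c"] cd by (auto simp: \<Sigma>_def)
  have b2: "norm (f (Complex t d)) \<le> K * exp (\<gamma> * \<bar>v\<bar>) * M * exp (- \<gamma> * \<bar>t\<bar>)" for t
    using bndf[of "Complex t d"] cd by (auto simp: \<Sigma>_def)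
  have b3: "norm (f z) \<le> K * exp (\<gamma> * \<bar>v\<bar>) * M * exp (- \<gamma> * \<bar>Re z\<bar>)"
    if "0 \<le> \<bar>Re z\<bar>" "c \<le> Im z" "Im z \<le> d" for z
    using bndf[of z] that by (auto simp: \<Sigma>_def)
  have p0: "(0::real) \<le> 0" by simp
  note ss = strip_shift[OF cd \<gamma> p0 c1 b1 b2 b3 rect]
  then show "integrable lborel (\<lambda>t. f (Complex t c))" "integrable lborel (\<lambda>t. f (Complex t d))"
    "(LINT t|lborel. f (Complex t c)) = (LINT t|lborel. f (Complex t d))" by auto
qed

lemma poisson:
  fixes \<Lambda> :: "complex \<Rightarrow> complex" and v a M :: real
  assumes a: "a > 0"
    and hol: "\<Lambda> holomorphic_on {z. -a \<le> Im z \<and> Im z \<le> a}"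
    and bnd: "\<And>z. -a \<le> Im z \<Longrightarrow> Im z \<le> a \<Longrightarrow> norm (\<Lambda> z) \<le> M"
  defines "f \<equiv> \<lambda>w. Pk a (of_real v - w + \<i> * of_real a) * \<Lambda> w"
  shows "integrable lborel (\<lambda>t. f (Complex t (-a)))" "integrable lborel (\<lambda>t. f (Complex t a))"
    "(LINT t|lborel. f (Complex t (-a))) - (LINT t|lborel. f (Complex t a)) = - \<Lambda> (of_real v)"
proof -
  define \<Sigma> where "\<Sigma> = {z. -a \<le> Im z \<and> Im z \<le> a}"
  define \<gamma> where "\<gamma> = pi / (2 * a)"
  have \<gamma>: "\<gamma> > 0" using a by (simp add: \<gamma>_def)
  have "norm (\<Lambda> 0) \<le> M" using bnd[of 0] a by simp
  then have M0: "0 \<le> M" using norm_ge_zero[of "\<Lambda> 0"] by linarith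
  define E where "E = (\<lambda>w. Ech (of_real pi * (of_real v - w + \<i> * of_real a) / (2 * of_real a)))"
  define Rz where "Rz = \<bar>v\<bar> + 2 * a / pi"
  have Rz0: "0 \<le> Rz" using a by (simp add: Rz_def)
  have fE: "f w = \<Lambda> w / (2 * of_real a * E w)" for w
    by (simp add: f_def Pk_def E_def)
  have Ev: "E (of_real v) = 0"
  proof -
    have e: "of_real pi * (of_real v - of_real v + \<i> * of_real a) / (2 * of_real a) = \<i> * of_real (pi/2)"
      using a by simp
    show ?thesis unfolding E_def e Ech_def exp_i_pi_half by (simp add: exp_minus exp_i_pi_half')
  qed
  have Enz: "E w \<noteq> 0" if "w \<in> \<Sigma>" "w \<noteq> of_real v" for w
  proof
    assume "E w = 0"
    then have "of_real pi * (of_real v - w + \<i> * of_real a) / (2 * of_real a) = \<i> * of_real (pi/2)"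
      unfolding E_def
    proof (rule Ech_zero_strip)
      have im: "Im (of_real pi * (of_real v - w + \<i> * of_real a) / (2 * of_real a)) = pi / (2 * a) * (a - Im w)"
        using a by (simp add: field_simps)
      have "0 \<le> a - Im w" "a - Im w \<le> 2 * a" using that by (auto simp: \<Sigma>_def)
      then have "0 \<le> pi / (2 * a) * (a - Im w)" "pi / (2 * a) * (a - Im w) \<le> pi / (2 * a) * (2 * a)"
        using a by (simp, intro mult_left_mono, auto)
      moreover have "pi / (2 * a) * (2 * a) = pi" using a by simp
      ultimately show "0 \<le> Im (of_real pi * (of_real v - w + \<i> * of_real a) / (2 * of_real a))"
        "Im (of_real pi * (of_real v - w + \<i> * of_real a) / (2 * of_real a)) \<le> pi"
        unfolding im by linarith+
    qed
    then have "of_real v - w + \<i> * of_real a = \<i> * of_real a"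
      using a by (simp add: field_simps)
    then show False using that by simp
  qed
  have Elines: "E w \<noteq> 0" if "Im w = a \<or> Im w = -a \<or> Rz \<le> \<bar>Re w\<bar>" "w \<in> \<Sigma>" for w
  proof (cases "w = of_real v")
    case True
    have "0 < 2 * a / pi" using a by simp
    then have "\<bar>v\<bar> < Rz" unfolding Rz_def by linarith
    then show ?thesis using that True a by auto
  next
    case False then show ?thesis using Enz that by auto
  qed
  have contE: "continuous_on UNIV E" unfolding E_def using a by (intro continuous_intros) auto
  have contL: "continuous_on \<Sigma> \<Lambda>" using hol unfolding \<Sigma>_def[symmetric] by (rule holomorphic_on_imp_continuous_on)
  have cf: "continuous_on S f" if "S \<subseteq> \<Sigma>" "\<And>w. w \<in> S \<Longrightarrow> E w \<noteq> 0" for S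
    unfolding fE using that a
    by (intro continuous_intros continuous_on_subset[OF contL] continuous_on_subset[OF contE]) auto
  have c1: "continuous_on {z. Im z = -a} f" "continuous_on {z. Im z = a} f"
    "continuous_on {z. Rz \<le> \<bar>Re z\<bar> \<and> -a \<le> Im z \<and> Im z \<le> a} f"
    by (rule cf; use Elines a in \<open>auto simp: \<Sigma>_def\<close>)+
  define B where "B = 1 / a * exp (\<gamma> * \<bar>v\<bar>) * M"
  have Pline: "norm (Pk a (of_real (v - t))) \<le> 1 / a * exp (\<gamma> * \<bar>v\<bar>) * exp (- \<gamma> * \<bar>t\<bar>)" for t
  proof -
    have "norm (Pk a (of_real (v - t))) \<le> 1 / (2 * a * cos (pi * 0 / (2 * a))) * exp (- (pi / (2 * a)) * \<bar>Re (of_real (v - t))\<bar>)"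
      by (rule Pk_bound_narrow) (use a in auto)
    also have "\<dots> = 1 / (2 * a) * exp (- \<gamma> * \<bar>v - t\<bar>)" by (simp add: \<gamma>_def)
    also have "\<dots> \<le> 1 / a * (exp (\<gamma> * \<bar>v\<bar>) * exp (- \<gamma> * \<bar>t\<bar>))"
    proof (rule mult_mono)
      show "1 / (2 * a) \<le> 1 / a" using a by (simp add: divide_simps)
    qed (use a exp_shift_bound[of \<gamma> v t] \<gamma> in auto)
    finally show ?thesis by (simp add: mult.assoc)
  qed
  have b1: "norm (f (Complex t (-a))) \<le> B * exp (- \<gamma> * \<bar>t\<bar>)" for t
  proof -
    have e: "of_real v - Complex t (-a) + \<i> * of_real a = of_real (v - t) + 2 * \<i> * of_real a"
      by (simp add: Complex_eq)
    have "norm (f (Complex t (-a))) = norm (Pk a (of_real (v - t))) * norm (\<Lambda> (Complex t (-a)))"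
      unfolding f_def e Pk_shift[OF a] by (simp add: norm_mult)
    also have "\<dots> \<le> (1 / a * exp (\<gamma> * \<bar>v\<bar>) * exp (- \<gamma> * \<bar>t\<bar>)) * M"
      by (rule mult_mono[OF Pline bnd]) (use a in auto)
    finally show ?thesis by (simp add: B_def algebra_simps)
  qed
  have b2: "norm (f (Complex t a)) \<le> B * exp (- \<gamma> * \<bar>t\<bar>)" for t
  proof -
    have e: "of_real v - Complex t a + \<i> * of_real a = of_real (v - t)"
      by (simp add: Complex_eq)
    have "norm (f (Complex t a)) = norm (Pk a (of_real (v - t))) * norm (\<Lambda> (Complex t a))"
      unfolding f_def e by (simp add: norm_mult)
    also have "\<dots> \<le> (1 / a * exp (\<gamma> * \<bar>v\<bar>) * exp (- \<gamma> * \<bar>t\<bar>)) * M"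
      by (rule mult_mono[OF Pline bnd]) (use a in auto)
    finally show ?thesis by (simp add: B_def algebra_simps)
  qed
  have b3: "norm (f z) \<le> B * exp (- \<gamma> * \<bar>Re z\<bar>)" if z: "Rz \<le> \<bar>Re z\<bar>" "-a \<le> Im z" "Im z \<le> a" for z
  proof -
    have r: "Re (of_real v - z + \<i> * of_real a) = v - Re z" by simp
    have far: "2 * a / pi \<le> \<bar>Re (of_real v - z + \<i> * of_real a)\<bar>"
      unfolding r using z(1) by (simp add: Rz_def)
    have "norm (Pk a (of_real v - z + \<i> * of_real a)) \<le> 1 / a * exp (- \<gamma> * \<bar>v - Re z\<bar>)"
      using Pk_bound_far[OF a far] unfolding r \<gamma>_def .
    also have "\<dots> \<le> 1 / a * (exp (\<gamma> * \<bar>v\<bar>) * exp (- \<gamma> * \<bar>Re z\<bar>))"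
      by (rule mult_left_mono) (use a exp_shift_bound[of \<gamma> v "Re z"] \<gamma> in auto)
    finally have P: "norm (Pk a (of_real v - z + \<i> * of_real a)) \<le> 1 / a * exp (\<gamma> * \<bar>v\<bar>) * exp (- \<gamma> * \<bar>Re z\<bar>)"
      by (simp add: mult.assoc)
    have "norm (f z) = norm (Pk a (of_real v - z + \<i> * of_real a)) * norm (\<Lambda> z)"
      unfolding f_def by (simp add: norm_mult)
    also have "\<dots> \<le> (1 / a * exp (\<gamma> * \<bar>v\<bar>) * exp (- \<gamma> * \<bar>Re z\<bar>)) * M"
      by (rule mult_mono[OF P bnd[OF z(2,3)]]) (use a in auto)
    finally show ?thesis by (simp add: B_def algebra_simps)
  qed
  define G where "G = (\<lambda>w. if w = of_real v then deriv E (of_real v) else (E w - E (of_real v)) / (w - of_real v))"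
  have holE: "E holomorphic_on UNIV" unfolding E_def using a by (intro holomorphic_intros) auto
  have holG: "G holomorphic_on UNIV" unfolding G_def by (rule pole_lemma[OF holE]) simp
  have e: "of_real pi * (of_real v - of_real v + \<i> * of_real a) / (2 * of_real a) = \<i> * of_real (pi/2)"
    using a by simp
  have "(E has_field_derivative (of_real pi * (-1) / (2 * of_real a)) *
        (exp (of_real pi * (of_real v - of_real v + \<i> * of_real a) / (2 * of_real a)) -
         exp (- (of_real pi * (of_real v - of_real v + \<i> * of_real a) / (2 * of_real a))))) (at (of_real v))"
    unfolding E_def Ech_def by (auto intro!: derivative_eq_intros simp: algebra_simps)
  then have d1: "(E has_field_derivative (of_real pi * (-1) / (2 * of_real a)) * (\<i> - inverse \<i>)) (at (of_real v))"
    unfolding e exp_minus exp_i_pi_half .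
  have dE: "deriv E (of_real v) = - \<i> * of_real (pi / a)"
    unfolding DERIV_imp_deriv[OF d1] using a by (simp add: field_simps)
  have Gv: "G (of_real v) = - \<i> * of_real (pi / a)" by (simp add: G_def dE)
  have Gnz: "G w \<noteq> 0" if "w \<in> \<Sigma>" for w
  proof (cases "w = of_real v")
    case True then show ?thesis using Gv a by simp
  next
    case False then show ?thesis using Enz[OF that False] Ev by (simp add: G_def)
  qed
  define J where "J = 2 * of_real pi * \<i> * (\<Lambda> (of_real v) / (2 * of_real a * G (of_real v)))"
  have J: "J = - \<Lambda> (of_real v)" using a by (simp add: J_def Gv field_simps)
  have rect: "(f has_contour_integral J) (rectpath (Complex (-T) (-a)) (Complex T a))" if T: "Rz < T" for T
  proof -
    have "0 < 2 * a / pi" using a by simp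
    then have T0: "\<bar>v\<bar> < T" using T unfolding Rz_def by linarith
    define S where "S = cbox (Complex (-T) (-a)) (Complex T a)"
    have sub: "S \<subseteq> \<Sigma>" by (auto simp: S_def \<Sigma>_def in_cbox_complex_iff)
    have holF: "(\<lambda>w. \<Lambda> w / (2 * of_real a * G w)) holomorphic_on S"
      using a Gnz sub
      by (intro holomorphic_intros holomorphic_on_subset[OF hol] holomorphic_on_subset[OF holG])
         (auto simp: \<Sigma>_def)
    have vin: "of_real v \<in> box (Complex (-T) (-a)) (Complex T a)"
      using T0 a by (auto simp: in_box_complex_iff)
    have intS: "interior S = box (Complex (-T) (-a)) (Complex T a)" by (simp add: S_def interior_cbox)
    have pimg: "path_image (rectpath (Complex (-T) (-a)) (Complex T a)) = S - box (Complex (-T) (-a)) (Complex T a)"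
      unfolding S_def by (rule path_image_rectpath_cbox_minus_box) (use T0 a in auto)
    have "((\<lambda>w. \<Lambda> w / (2 * of_real a * G w) / (w - of_real v)) has_contour_integral
            (2 * pi * \<i> * winding_number (rectpath (Complex (-T) (-a)) (Complex T a)) (of_real v) *
              (\<Lambda> (of_real v) / (2 * of_real a * G (of_real v)))))
           (rectpath (Complex (-T) (-a)) (Complex T a))"
    proof (rule Cauchy_integral_formula_weak[where k = "{}"])
      show "convex S" by (simp add: S_def)
      show "continuous_on S (\<lambda>w. \<Lambda> w / (2 * of_real a * G w))" using holF by (rule holomorphic_on_imp_continuous_on)
      fix x assume "x \<in> interior S - {}"
      then show "(\<lambda>w. \<Lambda> w / (2 * of_real a * G w)) field_differentiable at x"
        using holomorphic_on_imp_differentiable_at[OF holomorphic_on_subset[OF holF interior_subset]] by auto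
    next
      show "of_real v \<in> interior S - {}" using vin intS by simp
      show "path_image (rectpath (Complex (-T) (-a)) (Complex T a)) \<subseteq> S - {of_real v}" using pimg vin by auto
    qed auto
    moreover have "winding_number (rectpath (Complex (-T) (-a)) (Complex T a)) (of_real v) = 1"
      by (rule winding_number_rectpath[OF vin])
    ultimately have *: "((\<lambda>w. \<Lambda> w / (2 * of_real a * G w) / (w - of_real v)) has_contour_integral J)
        (rectpath (Complex (-T) (-a)) (Complex T a))"
      by (simp add: J_def)
    show ?thesis
    proof (rule has_contour_integral_eq[OF *])
      fix w assume "w \<in> path_image (rectpath (Complex (-T) (-a)) (Complex T a))"
      then have "w \<noteq> of_real v" using pimg vin by auto
      then show "\<Lambda> w / (2 * of_real a * G w) / (w - of_real v) = f w"
      proof -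
        have d: "w - of_real v \<noteq> 0" using \<open>w \<noteq> of_real v\<close> by simp
        have Gw: "G w = E w / (w - of_real v)" using \<open>w \<noteq> of_real v\<close> Ev by (simp add: G_def)
        show ?thesis unfolding fE Gw using d a by (cases "E w = 0") (simp_all add: field_simps)
      qed
    qed
  qed
  have p0: "-a < a" using a by simp
  note ss = strip_shift[OF p0 \<gamma> Rz0 c1 b1 b2 b3 rect]
  then show "integrable lborel (\<lambda>t. f (Complex t (-a)))" "integrable lborel (\<lambda>t. f (Complex t a))"
    "(LINT t|lborel. f (Complex t (-a))) - (LINT t|lborel. f (Complex t a)) = - \<Lambda> (of_real v)"
    using J by auto
qed

lemma exp_discrete_const:
  fixes \<psi> :: "'a::topological_space \<Rightarrow> complex"
  assumes S: "connected S" and c: "continuous_on S \<psi>" and e: "\<And>z. z \<in> S \<Longrightarrow> exp (\<psi> z) = c"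
  shows "\<psi> constant_on S"
proof (rule continuous_discrete_range_constant[OF S c])
  fix x assume x: "x \<in> S"
  show "\<exists>e>0. \<forall>y. y \<in> S \<and> \<psi> y \<noteq> \<psi> x \<longrightarrow> e \<le> norm (\<psi> y - \<psi> x)"
  proof (intro exI[of _ "2*pi"] conjI allI impI)
    show "0 < 2 * pi" by simp
    fix y assume y: "y \<in> S \<and> \<psi> y \<noteq> \<psi> x"
    then have "exp (\<psi> y) = exp (\<psi> x)" using e x by auto
    then obtain n :: int where n: "\<psi> y = \<psi> x + (of_int (2 * n) * pi) * \<i>" by (auto simp: exp_eq)
    with y have "n \<noteq> 0" by auto
    then have "1 \<le> \<bar>real_of_int n\<bar>" by linarith
    have "norm (\<psi> y - \<psi> x) = norm (of_int (2 * n) * complex_of_real pi * \<i>)" using n by simp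
    also have "\<dots> = 2 * \<bar>real_of_int n\<bar> * pi" by (simp add: norm_mult)
    finally show "2 * pi \<le> norm (\<psi> y - \<psi> x)" using \<open>1 \<le> \<bar>real_of_int n\<bar>\<close> by simp
  qed
qed

lemma strip_eq: "strip x = {z. - x \<le> Im z \<and> Im z \<le> x}"
  unfolding strip_def by auto

lemma convex_strip: "convex (strip x)"
proof -
  have "strip x = {z. Im z \<ge> -x} \<inter> {z. Im z \<le> x}" unfolding strip_eq by auto
  then show ?thesis by (simp add: convex_Int convex_halfspace_Im_ge convex_halfspace_Im_le)
qed

lemma norm_Ln_near1:
  assumes "norm (u - 1) < 1/2"
  shows "norm (Ln u) \<le> 1 + pi"
proof -
  have u0: "u \<noteq> 0" using assms by auto
  have "norm u < 3/2" "1/2 < norm u"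
    using assms norm_triangle_ineq2[of u 1] norm_triangle_ineq3[of u 1]
    by (auto simp: norm_minus_commute)
  then have A: "ln (norm u) < ln 2" "ln (1/2) < ln (norm u)"
    using u0 by (auto intro: ln_less_cancel_iff[THEN iffD2])
  have B: "ln (2::real) \<le> 1" using ln_le_minus_one[of 2] by simp
  have C: "ln (1/2::real) = - ln 2" by (simp add: ln_div)
  have D: "Re (Ln u) = ln (norm u)" using u0 by simp
  have "\<bar>Re (Ln u)\<bar> \<le> 1" unfolding D using A B C by linarith
  moreover have "\<bar>Im (Ln u)\<bar> \<le> pi" using mpi_less_Im_Ln[OF u0] Im_Ln_le_pi[OF u0] by auto
  ultimately show ?thesis using cmod_le[of "Ln u"] by linarith
qed

lemma log_bounded_half:
  fixes \<Lambda> g :: "complex \<Rightarrow> complex"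
  assumes H: "convex H" and cL: "continuous_on H \<Lambda>" and cg: "continuous_on H g"
    and e: "\<And>z. z \<in> H \<Longrightarrow> exp (\<Lambda> z) = g z" and c: "c \<noteq> 0"
    and near: "\<And>z. z \<in> H \<Longrightarrow> norm (g z - c) < norm c / 2"
  shows "\<exists>M. \<forall>z\<in>H. norm (\<Lambda> z) \<le> M"
proof (cases "H = {}")
  case True then show ?thesis by auto
next
  case False
  then obtain z0 where z0: "z0 \<in> H" by auto
  have u1: "norm (g z / c - 1) < 1/2" if "z \<in> H" for z
  proof -
    have "g z / c - 1 = (g z - c) / c" using c by (simp add: field_simps)
    then have "norm (g z / c - 1) = norm (g z - c) / norm c" by (simp add: norm_divide)
    also have "\<dots> < (norm c / 2) / norm c" using near[OF that] c by (intro divide_strict_right_mono) auto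
    also have "\<dots> = 1/2" using c by simp
    finally show ?thesis .
  qed
  have notnp: "g z / c \<notin> \<real>\<^sub>\<le>\<^sub>0" if "z \<in> H" for z
  proof
    assume "g z / c \<in> \<real>\<^sub>\<le>\<^sub>0"
    then have "Re (g z / c) \<le> 0" by (simp add: complex_nonpos_Reals_iff)
    moreover have "\<bar>Re (g z / c - 1)\<bar> \<le> norm (g z / c - 1)" by (rule abs_Re_le_cmod)
    ultimately show False using u1[OF that] by simp
  qed
  define \<psi> where "\<psi> z = \<Lambda> z - Ln (g z / c)" for z
  have cpsi: "continuous_on H \<psi>"
    unfolding \<psi>_def using notnp by (intro continuous_intros cL cg c) auto
  have gnz: "g z \<noteq> 0" if "z \<in> H" for z using e[OF that] by (metis exp_not_eq_zero)
  have epsi: "exp (\<psi> z) = c" if "z \<in> H" for z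
  proof -
    have "exp (Ln (g z / c)) = g z / c" using gnz[OF that] c by simp
    then show ?thesis unfolding \<psi>_def exp_diff e[OF that] using gnz[OF that] c by simp
  qed
  have "\<psi> constant_on H"
    by (rule exp_discrete_const[OF convex_connected[OF H] cpsi epsi])
  then obtain k where k: "\<And>z. z \<in> H \<Longrightarrow> \<psi> z = k" by (auto simp: constant_on_def)
  show ?thesis
  proof (intro exI ballI)
    fix z assume z: "z \<in> H"
    have "\<Lambda> z = k + Ln (g z / c)" using k[OF z] by (simp add: \<psi>_def algebra_simps)
    then have "norm (\<Lambda> z) \<le> norm k + norm (Ln (g z / c))" by (simp add: norm_triangle_ineq)
    also have "\<dots> \<le> norm k + (1 + pi)" using norm_Ln_near1[OF u1[OF z]] by simp
    finally show "norm (\<Lambda> z) \<le> norm k + (1 + pi)" .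
  qed
qed

lemma anzc_log:
  fixes g :: "complex \<Rightarrow> complex" and L :: "real \<Rightarrow> complex" and w :: real
  assumes anzc: "ANZC g w" and w0: "w \<ge> 0" and Lc: "continuous_on UNIV L"
    and Le: "\<And>t. exp (L t) = g (of_real t)"
  shows "\<exists>\<Lambda> M. \<Lambda> holomorphic_on strip w \<and> (\<forall>z\<in>strip w. exp (\<Lambda> z) = g z) \<and>
           (\<forall>t. \<Lambda> (of_real t) = L t) \<and> (\<forall>z\<in>strip w. norm (\<Lambda> z) \<le> M)"
proof -
  define S where "S = strip w"
  have holg: "g holomorphic_on S" using anzc unfolding ANZC_def S_def by (auto intro: analytic_imp_holomorphic)
  have nz: "\<And>z. z \<in> S \<Longrightarrow> g z \<noteq> 0" using anzc unfolding ANZC_def S_def by auto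
  obtain c1 where c1: "c1 \<noteq> 0" "(g \<longlongrightarrow> c1) (inf (filtercomap Re at_top) (principal S))"
    using anzc unfolding ANZC_def S_def by auto
  obtain c2 where c2: "c2 \<noteq> 0" "(g \<longlongrightarrow> c2) (inf (filtercomap Re at_bot) (principal S))"
    using anzc unfolding ANZC_def S_def by auto
  have cvS: "convex S" unfolding S_def by (rule convex_strip)
  obtain \<Lambda>0 where hol0: "\<Lambda>0 holomorphic_on S" and e0: "\<And>z. z \<in> S \<Longrightarrow> g z = exp (\<Lambda>0 z)"
    using contractible_imp_holomorphic_log[OF holg convex_imp_contractible[OF cvS] nz] by metis
  have realS: "of_real t \<in> S" for t using w0 by (simp add: S_def strip_def)
  have c0: "continuous_on S \<Lambda>0" using hol0 by (rule holomorphic_on_imp_continuous_on)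
  define \<phi> where "\<phi> t = \<Lambda>0 (of_real t) - L t" for t
  have cphi: "continuous_on UNIV \<phi>"
    unfolding \<phi>_def
    by (intro continuous_intros Lc continuous_on_compose2[OF c0]) (auto simp: realS)
  have ephi: "exp (\<phi> t) = 1" for t
  proof -
    have "g (of_real t) \<noteq> 0" using nz realS by blast
    then show ?thesis unfolding \<phi>_def exp_diff Le e0[OF realS, symmetric] by simp
  qed
  have "\<phi> constant_on UNIV" by (rule exp_discrete_const[OF connected_UNIV cphi ephi])
  then obtain k where k: "\<And>t. \<phi> t = k" by (auto simp: constant_on_def)
  have ek: "exp k = 1" using ephi k by metis
  define \<Lambda> where "\<Lambda> z = \<Lambda>0 z - k" for z
  have hol: "\<Lambda> holomorphic_on S" unfolding \<Lambda>_def by (intro holomorphic_intros hol0)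
  have cL: "continuous_on S \<Lambda>" using hol by (rule holomorphic_on_imp_continuous_on)
  have cg: "continuous_on S g" using holg by (rule holomorphic_on_imp_continuous_on)
  have eL: "exp (\<Lambda> z) = g z" if "z \<in> S" for z
    unfolding \<Lambda>_def exp_diff ek e0[OF that] by simp
  have Lr: "\<Lambda> (of_real t) = L t" for t using k[of t] unfolding \<Lambda>_def \<phi>_def by (simp add: algebra_simps)
  have "\<forall>\<^sub>F z in inf (filtercomap Re at_top) (principal S). dist (g z) c1 < norm c1 / 2"
    by (rule tendstoD[OF c1(2)]) (use c1(1) in simp)
  then obtain Q R1 where "\<forall>n\<ge>R1. Q n" "\<forall>x. Q (Re x) \<longrightarrow> x \<in> S \<longrightarrow> dist (g x) c1 < norm c1 / 2"
    unfolding eventually_inf_principal eventually_filtercomap eventually_at_top_linorder by blast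
  then have R1: "\<And>z. z \<in> S \<Longrightarrow> R1 \<le> Re z \<Longrightarrow> norm (g z - c1) < norm c1 / 2"
    by (auto simp: dist_norm)
  have "\<forall>\<^sub>F z in inf (filtercomap Re at_bot) (principal S). dist (g z) c2 < norm c2 / 2"
    by (rule tendstoD[OF c2(2)]) (use c2(1) in simp)
  then obtain Q' R2 where "\<forall>n\<le>R2. Q' n" "\<forall>x. Q' (Re x) \<longrightarrow> x \<in> S \<longrightarrow> dist (g x) c2 < norm c2 / 2"
    unfolding eventually_inf_principal eventually_filtercomap eventually_at_bot_linorder by blast
  then have R2: "\<And>z. z \<in> S \<Longrightarrow> Re z \<le> R2 \<Longrightarrow> norm (g z - c2) < norm c2 / 2"
    by (auto simp: dist_norm)
  define H1 where "H1 = S \<inter> {z. R1 \<le> Re z}"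
  define H2 where "H2 = S \<inter> {z. Re z \<le> R2}"
  have cvH1: "convex H1" unfolding H1_def by (intro convex_Int cvS convex_halfspace_Re_ge)
  have cvH2: "convex H2" unfolding H2_def by (intro convex_Int cvS convex_halfspace_Re_le)
  have "\<exists>M. \<forall>z\<in>H1. norm (\<Lambda> z) \<le> M"
  proof (rule log_bounded_half[OF cvH1])
    show "continuous_on H1 \<Lambda>" by (rule continuous_on_subset[OF cL]) (auto simp: H1_def)
    show "continuous_on H1 g" by (rule continuous_on_subset[OF cg]) (auto simp: H1_def)
    show "\<And>z. z \<in> H1 \<Longrightarrow> exp (\<Lambda> z) = g z" using eL by (auto simp: H1_def)
    show "c1 \<noteq> 0" by (rule c1(1))
    show "\<And>z. z \<in> H1 \<Longrightarrow> norm (g z - c1) < norm c1 / 2" using R1 by (auto simp: H1_def)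
  qed
  then obtain M1 where M1: "\<forall>z\<in>H1. norm (\<Lambda> z) \<le> M1" by blast
  have "\<exists>M. \<forall>z\<in>H2. norm (\<Lambda> z) \<le> M"
  proof (rule log_bounded_half[OF cvH2])
    show "continuous_on H2 \<Lambda>" by (rule continuous_on_subset[OF cL]) (auto simp: H2_def)
    show "continuous_on H2 g" by (rule continuous_on_subset[OF cg]) (auto simp: H2_def)
    show "\<And>z. z \<in> H2 \<Longrightarrow> exp (\<Lambda> z) = g z" using eL by (auto simp: H2_def)
    show "c2 \<noteq> 0" by (rule c2(1))
    show "\<And>z. z \<in> H2 \<Longrightarrow> norm (g z - c2) < norm c2 / 2" using R2 by (auto simp: H2_def)
  qed
  then obtain M2 where M2: "\<forall>z\<in>H2. norm (\<Lambda> z) \<le> M2" by blast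
  define K where "K = cbox (Complex R2 (-w)) (Complex R1 w)"
  have KS: "K \<subseteq> S" by (auto simp: K_def S_def strip_def in_cbox_complex_iff)
  have "compact (\<Lambda> ` K)"
    by (rule compact_continuous_image[OF continuous_on_subset[OF cL KS]]) (simp add: K_def)
  then have "bounded (\<Lambda> ` K)" by (rule compact_imp_bounded)
  then obtain M3 where "\<forall>x\<in>\<Lambda> ` K. norm x \<le> M3" unfolding bounded_iff by blast
  then have M3: "\<forall>z\<in>K. norm (\<Lambda> z) \<le> M3" by auto
  have bnd: "norm (\<Lambda> z) \<le> max M1 (max M2 M3)" if z: "z \<in> S" for z
  proof -
    consider "R1 \<le> Re z" | "Re z \<le> R2" | "R2 \<le> Re z \<and> Re z \<le> R1" by linarith
    then show ?thesis
    proof cases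
      case 1 then have "z \<in> H1" using z by (simp add: H1_def)
      then show ?thesis using M1 by fastforce
    next
      case 2 then have "z \<in> H2" using z by (simp add: H2_def)
      then show ?thesis using M2 by fastforce
    next
      case 3 then have "z \<in> K" using z by (auto simp: K_def S_def strip_def in_cbox_complex_iff)
      then show ?thesis using M3 by fastforce
    qed
  qed
  show ?thesis
    using hol eL Lr bnd unfolding S_def by blast
qed

lemma shift_pair:
  fixes \<Lambda> :: "complex \<Rightarrow> complex" and a b wj Mb v :: real
  assumes a: "a > 0" and b: "0 \<le> b" "b < a" "b \<le> wj" and wj: "0 < wj"
    and hol: "\<Lambda> holomorphic_on strip wj" and bnd: "\<And>z. z \<in> strip wj \<Longrightarrow> norm (\<Lambda> z) \<le> Mb"
  shows "integrable lborel (\<lambda>t. kernel a b (v - t) * \<Lambda> (of_real t))"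
    "integrable lborel (\<lambda>t. Pk a (of_real (v - t)) * (\<Lambda> (of_real t - \<i> * of_real b) + \<Lambda> (of_real t + \<i> * of_real b)))"
    "(LINT t|lborel. kernel a b (v - t) * \<Lambda> (of_real t)) =
     (LINT t|lborel. Pk a (of_real (v - t)) * (\<Lambda> (of_real t - \<i> * of_real b) + \<Lambda> (of_real t + \<i> * of_real b)))"
proof -
  have kern: "kernel a b (v - t) * \<Lambda> (of_real t) =
      Pk a (of_real (v - t) - \<i> * of_real b) * \<Lambda> (of_real t) + Pk a (of_real (v - t) + \<i> * of_real b) * \<Lambda> (of_real t)" for t
    using kernel_eq[OF a b(1,2), of "v - t"] by (simp add: distrib_right)
  have hsub: "\<Lambda> holomorphic_on {z. c \<le> Im z \<and> Im z \<le> d}" if "-wj \<le> c" "d \<le> wj" for c d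
    by (rule holomorphic_on_subset[OF hol]) (use that in \<open>auto simp: strip_def\<close>)
  have bsub: "norm (\<Lambda> z) \<le> Mb" if "-wj \<le> c" "d \<le> wj" "c \<le> Im z" "Im z \<le> d" for c d z
    by (rule bnd) (use that in \<open>auto simp: strip_def\<close>)
  have all: "integrable lborel (\<lambda>t. kernel a b (v - t) * \<Lambda> (of_real t)) \<and>
    integrable lborel (\<lambda>t. Pk a (of_real (v - t)) * (\<Lambda> (of_real t - \<i> * of_real b) + \<Lambda> (of_real t + \<i> * of_real b))) \<and>
    (LINT t|lborel. kernel a b (v - t) * \<Lambda> (of_real t)) =
     (LINT t|lborel. Pk a (of_real (v - t)) * (\<Lambda> (of_real t - \<i> * of_real b) + \<Lambda> (of_real t + \<i> * of_real b)))"
  proof (cases "b = 0")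
    case True
    define \<delta> where "\<delta> = min wj (a/2)"
    have \<delta>: "0 < \<delta>" "\<delta> < a" "\<delta> \<le> wj" using a wj by (auto simp: \<delta>_def)
    have h0: "\<Lambda> holomorphic_on {z. 0 \<le> Im z \<and> Im z \<le> \<delta>}" by (rule hsub) (use \<delta> wj in auto)
    have b0: "norm (\<Lambda> z) \<le> Mb" if "0 \<le> Im z" "Im z \<le> \<delta>" for z
      by (rule bsub[of 0 \<delta>]) (use \<delta> wj that in auto)
    have n0: "\<bar>0 - y\<bar> \<le> \<delta>" if "0 \<le> y" "y \<le> \<delta>" for y using that by simp
    note sg = shift_gen[OF a \<delta>(1) \<delta>(2) h0 b0 n0, of v]
    have i0: "integrable lborel (\<lambda>t. Pk a (of_real (v - t)) * \<Lambda> (of_real t))"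
    proof -
      have "integrable lborel (\<lambda>t. Pk a (of_real v - Complex t 0 + \<i> * of_real 0) * \<Lambda> (Complex t 0))"
        by (rule sg(1))
      moreover have "Complex t 0 = of_real t" for t by (simp add: complex_of_real_def)
      ultimately show ?thesis by simp
    qed
    have e1: "kernel a b (v - t) * \<Lambda> (of_real t) = 2 * (Pk a (of_real (v - t)) * \<Lambda> (of_real t))" for t
      using kern[of t] True by simp
    have e2: "Pk a (of_real (v - t)) * (\<Lambda> (of_real t - \<i> * of_real b) + \<Lambda> (of_real t + \<i> * of_real b)) =
        2 * (Pk a (of_real (v - t)) * \<Lambda> (of_real t))" for t
      unfolding True by simp
    show ?thesis unfolding e1 e2 using i0 by auto
  next
    case False
    then have bp: "0 < b" using b by simp
    have h1: "\<Lambda> holomorphic_on {z. -b \<le> Im z \<and> Im z \<le> 0}" by (rule hsub) (use b wj in auto)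
    have b1: "norm (\<Lambda> z) \<le> Mb" if "-b \<le> Im z" "Im z \<le> 0" for z
      by (rule bsub[of "-b" 0]) (use b wj that in auto)
    have n1: "\<bar>-b - y\<bar> \<le> b" if "-b \<le> y" "y \<le> 0" for y using that by simp
    have h2: "\<Lambda> holomorphic_on {z. 0 \<le> Im z \<and> Im z \<le> b}" by (rule hsub) (use b wj in auto)
    have b2: "norm (\<Lambda> z) \<le> Mb" if "0 \<le> Im z" "Im z \<le> b" for z
      by (rule bsub[of 0 b]) (use b wj that in auto)
    have n2: "\<bar>b - y\<bar> \<le> b" if "0 \<le> y" "y \<le> b" for y using that by simp
    have mb: "-b < 0" using bp by simp
    note sg1 = shift_gen[OF a mb b(2) h1 b1 n1, of v]
    note sg2 = shift_gen[OF a bp b(2) h2 b2 n2, of v]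
    have c1: "of_real v - Complex t (-b) + \<i> * of_real (-b) = of_real (v - t)" for t
      by (simp add: Complex_eq)
    have c2: "Complex t (-b) = of_real t - \<i> * of_real b" for t by (simp add: Complex_eq)
    have c3: "of_real v - Complex t 0 + \<i> * of_real (-b) = of_real (v - t) - \<i> * of_real b" for t
      by (simp add: Complex_eq)
    have c4: "Complex t 0 = of_real t" for t by (simp add: complex_of_real_def)
    have c5: "of_real v - Complex t 0 + \<i> * of_real b = of_real (v - t) + \<i> * of_real b" for t
      by (simp add: Complex_eq)
    have c6: "of_real v - Complex t b + \<i> * of_real b = of_real (v - t)" for t
      by (simp add: Complex_eq)
    have c7: "Complex t b = of_real t + \<i> * of_real b" for t by (simp add: Complex_eq)
    have s1: "integrable lborel (\<lambda>t. Pk a (of_real (v - t)) * \<Lambda> (of_real t - \<i> * of_real b))"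
      "integrable lborel (\<lambda>t. Pk a (of_real (v - t) - \<i> * of_real b) * \<Lambda> (of_real t))"
      "(LINT t|lborel. Pk a (of_real (v - t)) * \<Lambda> (of_real t - \<i> * of_real b)) =
       (LINT t|lborel. Pk a (of_real (v - t) - \<i> * of_real b) * \<Lambda> (of_real t))"
      using sg1 bp b unfolding c1 c2 c3 c4 by auto
    have s2: "integrable lborel (\<lambda>t. Pk a (of_real (v - t) + \<i> * of_real b) * \<Lambda> (of_real t))"
      "integrable lborel (\<lambda>t. Pk a (of_real (v - t)) * \<Lambda> (of_real t + \<i> * of_real b))"
      "(LINT t|lborel. Pk a (of_real (v - t) + \<i> * of_real b) * \<Lambda> (of_real t)) =
       (LINT t|lborel. Pk a (of_real (v - t)) * \<Lambda> (of_real t + \<i> * of_real b))"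
      using sg2 bp b unfolding c4 c5 c6 c7 by auto
    have d1: "Pk a (of_real (v - t)) * (\<Lambda> (of_real t - \<i> * of_real b) + \<Lambda> (of_real t + \<i> * of_real b)) =
        Pk a (of_real (v - t)) * \<Lambda> (of_real t - \<i> * of_real b) + Pk a (of_real (v - t)) * \<Lambda> (of_real t + \<i> * of_real b)" for t
      by (simp add: distrib_left)
    show ?thesis unfolding kern d1 using s1 s2 by auto
  qed
  then show "integrable lborel (\<lambda>t. kernel a b (v - t) * \<Lambda> (of_real t))"
    "integrable lborel (\<lambda>t. Pk a (of_real (v - t)) * (\<Lambda> (of_real t - \<i> * of_real b) + \<Lambda> (of_real t + \<i> * of_real b)))"
    "(LINT t|lborel. kernel a b (v - t) * \<Lambda> (of_real t)) =
     (LINT t|lborel. Pk a (of_real (v - t)) * (\<Lambda> (of_real t - \<i> * of_real b) + \<Lambda> (of_real t + \<i> * of_real b)))"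
    by auto
qed

lemma poisson2:
  fixes \<Lambda> :: "complex \<Rightarrow> complex" and a w0 Mb v :: real
  assumes a: "a > 0" and aw: "a \<le> w0"
    and hol: "\<Lambda> holomorphic_on strip w0" and bnd: "\<And>z. z \<in> strip w0 \<Longrightarrow> norm (\<Lambda> z) \<le> Mb"
  shows "integrable lborel (\<lambda>t. Pk a (of_real (v - t)) * \<Lambda> (of_real t - \<i> * of_real a))"
    "integrable lborel (\<lambda>t. Pk a (of_real (v - t)) * \<Lambda> (of_real t + \<i> * of_real a))"
    "(LINT t|lborel. Pk a (of_real (v - t)) * \<Lambda> (of_real t - \<i> * of_real a)) +
     (LINT t|lborel. Pk a (of_real (v - t)) * \<Lambda> (of_real t + \<i> * of_real a)) = \<Lambda> (of_real v)"
proof -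
  have h: "\<Lambda> holomorphic_on {z. -a \<le> Im z \<and> Im z \<le> a}"
    by (rule holomorphic_on_subset[OF hol]) (use aw in \<open>auto simp: strip_def\<close>)
  have b: "norm (\<Lambda> z) \<le> Mb" if "-a \<le> Im z" "Im z \<le> a" for z
    by (rule bnd) (use aw that in \<open>auto simp: strip_def\<close>)
  note P = poisson[OF a h b, of v]
  have c1: "of_real v - (of_real t - \<i> * of_real a) + \<i> * of_real a = of_real (v - t) + 2 * \<i> * of_real a" for t
    by (simp add: Complex_eq)
  have c2: "Complex t (-a) = of_real t - \<i> * of_real a" for t by (simp add: Complex_eq)
  have c3: "of_real v - (of_real t + \<i> * of_real a) + \<i> * of_real a = of_real (v - t)" for t
    by (simp add: Complex_eq)
  have c4: "Complex t a = of_real t + \<i> * of_real a" for t by (simp add: Complex_eq)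
  have f1: "(\<lambda>t. Pk a (of_real v - Complex t (-a) + \<i> * of_real a) * \<Lambda> (Complex t (-a))) =
      (\<lambda>t. - (Pk a (of_real (v - t)) * \<Lambda> (of_real t - \<i> * of_real a)))"
    unfolding c2 c1 Pk_shift[OF a] by simp
  have f2: "(\<lambda>t. Pk a (of_real v - Complex t a + \<i> * of_real a) * \<Lambda> (Complex t a)) =
      (\<lambda>t. Pk a (of_real (v - t)) * \<Lambda> (of_real t + \<i> * of_real a))"
    unfolding c4 c3 by simp
  show "integrable lborel (\<lambda>t. Pk a (of_real (v - t)) * \<Lambda> (of_real t - \<i> * of_real a))"
    using P(1) unfolding f1 by simp
  show "integrable lborel (\<lambda>t. Pk a (of_real (v - t)) * \<Lambda> (of_real t + \<i> * of_real a))"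
    using P(2) unfolding f2 by simp
  show "(LINT t|lborel. Pk a (of_real (v - t)) * \<Lambda> (of_real t - \<i> * of_real a)) +
     (LINT t|lborel. Pk a (of_real (v - t)) * \<Lambda> (of_real t + \<i> * of_real a)) = \<Lambda> (of_real v)"
    using P(3) unfolding f1 f2 by (simp add: algebra_simps)
qed

lemma Pk_integral:
  fixes a v :: real
  assumes a: "a > 0"
  shows "integrable lborel (\<lambda>t. Pk a (of_real (v - t)))" "(LINT t|lborel. Pk a (of_real (v - t))) = 1/2"
proof -
  have hol: "(\<lambda>_. 1) holomorphic_on strip a" by simp
  note P = poisson2[OF a order_refl hol, of 1 v]
  show "integrable lborel (\<lambda>t. Pk a (of_real (v - t)))" using P(1) by simp
  show "(LINT t|lborel. Pk a (of_real (v - t))) = 1/2" using P(3) by (simp add: mult.commute)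
qed

lemma cont_line:
  fixes \<Lambda> :: "complex \<Rightarrow> complex"
  assumes hol: "\<Lambda> holomorphic_on strip w" and y: "\<bar>y\<bar> \<le> w"
  shows "continuous_on UNIV (\<lambda>t::real. \<Lambda> (of_real t + \<i> * of_real y))"
    "continuous_on UNIV (\<lambda>t::real. \<Lambda> (of_real t - \<i> * of_real y))"
proof -
  have c: "continuous_on (strip w) \<Lambda>" using hol by (rule holomorphic_on_imp_continuous_on)
  show "continuous_on UNIV (\<lambda>t::real. \<Lambda> (of_real t + \<i> * of_real y))"
    by (rule continuous_on_compose2[OF c]) (use y in \<open>auto intro!: continuous_intros simp: strip_def\<close>)
  show "continuous_on UNIV (\<lambda>t::real. \<Lambda> (of_real t - \<i> * of_real y))"
    by (rule continuous_on_compose2[OF c]) (use y in \<open>auto intro!: continuous_intros simp: strip_def\<close>)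
qed

theorem lemma1:
  fixes M :: nat
    and vv :: "nat \<Rightarrow> real"
    and w :: "nat \<Rightarrow> real"
    and g :: "nat \<Rightarrow> complex \<Rightarrow> complex"
    and L :: "nat \<Rightarrow> real \<Rightarrow> complex"
  assumes M: "M \<ge> 1"
    and nonneg: "\<And>j. j \<le> M \<Longrightarrow> vv j \<ge> 0"
    and dom: "\<And>j. 1 \<le> j \<Longrightarrow> j \<le> M \<Longrightarrow> vv 0 > vv j"
    and Yeq: "\<And>v::real. g 0 (complex_of_real v - \<i> * complex_of_real (vv 0)) *
                          g 0 (complex_of_real v + \<i> * complex_of_real (vv 0)) =
                        (\<Prod>j=1..M. g j (complex_of_real v - \<i> * complex_of_real (vv j)) *
                                   g j (complex_of_real v + \<i> * complex_of_real (vv j)))"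
    and w_pos: "\<And>j. j \<le> M \<Longrightarrow> w j > 0"
    and w_ge: "\<And>j. j \<le> M \<Longrightarrow> w j \<ge> vv j"
    and anzc: "\<And>j. j \<le> M \<Longrightarrow> ANZC (g j) (w j)"
    and L_cont: "\<And>j. j \<le> M \<Longrightarrow> continuous_on UNIV (L j)"
    and L_log: "\<And>j v. j \<le> M \<Longrightarrow> exp (L j v) = g j (complex_of_real v)"
  shows "\<exists>C::complex.
           (\<forall>v::real. \<forall>j\<in>{1..M}.
              integrable lborel (\<lambda>v'. kernel (vv 0) (vv j) (v - v') * L j v')) \<and>
           (\<forall>v::real. L 0 v =
              (\<Sum>j=1..M. integral\<^sup>L lborel (\<lambda>v'. kernel (vv 0) (vv j) (v - v') * L j v')) + C)"
proof -
  define a where "a = vv 0"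
  have a: "a > 0" using dom[of 1] nonneg[of 1] M by (simp add: a_def)
  have ex: "\<forall>j. \<exists>p::(complex \<Rightarrow> complex) \<times> real. j \<le> M \<longrightarrow>
      (fst p holomorphic_on strip (w j) \<and> (\<forall>z\<in>strip (w j). exp (fst p z) = g j z) \<and>
       (\<forall>t. fst p (of_real t) = L j t) \<and> (\<forall>z\<in>strip (w j). norm (fst p z) \<le> snd p))"
  proof
    fix j
    show "\<exists>p::(complex \<Rightarrow> complex) \<times> real. j \<le> M \<longrightarrow>
      (fst p holomorphic_on strip (w j) \<and> (\<forall>z\<in>strip (w j). exp (fst p z) = g j z) \<and>
       (\<forall>t. fst p (of_real t) = L j t) \<and> (\<forall>z\<in>strip (w j). norm (fst p z) \<le> snd p))"
    proof (cases "j \<le> M")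
      case True
      from anzc_log[OF anzc[OF True] less_imp_le[OF w_pos[OF True]] L_cont[OF True] L_log[OF True]]
      obtain \<Lambda> Mb where "\<Lambda> holomorphic_on strip (w j) \<and> (\<forall>z\<in>strip (w j). exp (\<Lambda> z) = g j z) \<and>
           (\<forall>t. \<Lambda> (of_real t) = L j t) \<and> (\<forall>z\<in>strip (w j). norm (\<Lambda> z) \<le> Mb)" by blast
      then show ?thesis by (intro exI[of _ "(\<Lambda>, Mb)"]) simp
    qed simp
  qed
  then obtain p where p: "\<And>j. j \<le> M \<Longrightarrow>
      (fst (p j) holomorphic_on strip (w j) \<and> (\<forall>z\<in>strip (w j). exp (fst (p j) z) = g j z) \<and>
       (\<forall>t. fst (p j) (of_real t) = L j t) \<and> (\<forall>z\<in>strip (w j). norm (fst (p j) z) \<le> snd (p j)))"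
    by (metis choice)
  define Lam where "Lam j = fst (p j)" for j
  define Mb where "Mb j = snd (p j)" for j
  have hol: "\<And>j. j \<le> M \<Longrightarrow> Lam j holomorphic_on strip (w j)"
    and eL: "\<And>j z. j \<le> M \<Longrightarrow> z \<in> strip (w j) \<Longrightarrow> exp (Lam j z) = g j z"
    and Lr: "\<And>j t. j \<le> M \<Longrightarrow> Lam j (of_real t) = L j t"
    and bnd: "\<And>j z. j \<le> M \<Longrightarrow> z \<in> strip (w j) \<Longrightarrow> norm (Lam j z) \<le> Mb j"
    using p unfolding Lam_def Mb_def by blast+
  have jr: "0 \<le> vv j" "vv j < a" "vv j \<le> w j" "0 < w j" if "j \<in> {1..M}" for j
    using that nonneg[of j] dom[of j] w_ge[of j] w_pos[of j] by (auto simp: a_def)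
  note SP = shift_pair[OF a jr(1) jr(2) jr(3) jr(4) hol bnd]
  have Lr': "kernel a (vv j) (v - t) * L j t = kernel a (vv j) (v - t) * Lam j (of_real t)" if "j \<in> {1..M}" for j v t
    using Lr[of j t] that by simp
  have int1: "integrable lborel (\<lambda>t. kernel a (vv j) (v - t) * L j t)" if "j \<in> {1..M}" for j v
    unfolding Lr'[OF that] by (rule SP(1)) (use that in auto)
  define F where "F j v t = Pk a (of_real (v - t)) * (Lam j (of_real t - \<i> * of_real (vv j)) + Lam j (of_real t + \<i> * of_real (vv j)))" for j v t
  have int2: "integrable lborel (F j v)" if "j \<in> {1..M}" for j v
    unfolding F_def by (rule SP(2)) (use that in auto)
  have eq1: "(LINT t|lborel. kernel a (vv j) (v - t) * L j t) = (LINT t|lborel. F j v t)" if "j \<in> {1..M}" for j v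
    unfolding Lr'[OF that] F_def by (rule SP(3)) (use that in auto)
  define S where "S t = Lam 0 (of_real t - \<i> * of_real a) + Lam 0 (of_real t + \<i> * of_real a) -
     (\<Sum>j=1..M. Lam j (of_real t - \<i> * of_real (vv j)) + Lam j (of_real t + \<i> * of_real (vv j)))" for t
  have w0: "a \<le> w 0" using w_ge[of 0] by (simp add: a_def)
  have cS: "continuous_on UNIV S"
    unfolding S_def
  proof (intro continuous_on_diff continuous_on_add continuous_on_sum)
    show "continuous_on UNIV (\<lambda>t. Lam 0 (of_real t - \<i> * of_real a))"
      "continuous_on UNIV (\<lambda>t. Lam 0 (of_real t + \<i> * of_real a))"
      using cont_line[OF hol[of 0]] w0 a by auto
    fix j assume "j \<in> {1..M}"
    then show "continuous_on UNIV (\<lambda>t. Lam j (of_real t - \<i> * of_real (vv j)))"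
      "continuous_on UNIV (\<lambda>t. Lam j (of_real t + \<i> * of_real (vv j)))"
      using cont_line[OF hol[of j]] jr[of j] by auto
  qed
  have inS: "of_real t + \<i> * of_real y \<in> strip x" "of_real t - \<i> * of_real y \<in> strip x"
    if "0 \<le> y" "y \<le> x" for t x y using that by (auto simp: strip_def)
  have eS: "exp (S t) = 1" for t
  proof -
    have e0: "exp (Lam 0 (of_real t - \<i> * of_real a) + Lam 0 (of_real t + \<i> * of_real a)) =
        g 0 (of_real t - \<i> * of_real a) * g 0 (of_real t + \<i> * of_real a)"
      unfolding exp_add using eL[of 0] inS[of a "w 0" t] a w0 by simp
    have ej: "exp (\<Sum>j=1..M. Lam j (of_real t - \<i> * of_real (vv j)) + Lam j (of_real t + \<i> * of_real (vv j))) =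
        (\<Prod>j=1..M. g j (of_real t - \<i> * of_real (vv j)) * g j (of_real t + \<i> * of_real (vv j)))"
      unfolding exp_sum[OF finite_atLeastAtMost]
    proof (rule prod.cong[OF refl])
      fix j assume j: "j \<in> {1..M}"
      show "exp (Lam j (of_real t - \<i> * of_real (vv j)) + Lam j (of_real t + \<i> * of_real (vv j))) =
        g j (of_real t - \<i> * of_real (vv j)) * g j (of_real t + \<i> * of_real (vv j))"
        unfolding exp_add using eL[of j] inS[of "vv j" "w j" t] jr[OF j] j by simp
    qed
    have nz: "(\<Prod>j=1..M. g j (of_real t - \<i> * of_real (vv j)) * g j (of_real t + \<i> * of_real (vv j))) \<noteq> 0"
      using ej[symmetric] by simp
    show ?thesis unfolding S_def exp_diff e0 ej using Yeq[of t] nz by (simp add: a_def)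
  qed
  have "S constant_on UNIV" by (rule exp_discrete_const[OF connected_UNIV cS eS])
  then obtain D where D: "\<And>t. S t = D" by (auto simp: constant_on_def)
  have main: "L 0 v = (\<Sum>j=1..M. LINT t|lborel. kernel a (vv j) (v - t) * L j t) + D / 2" for v
  proof -
    note P0 = poisson2[OF a w0 hol[of 0] bnd[of 0], of v]
    note PI = Pk_integral[OF a, of v]
    have "(\<Sum>j=1..M. LINT t|lborel. kernel a (vv j) (v - t) * L j t) = (\<Sum>j=1..M. LINT t|lborel. F j v t)"
      by (rule sum.cong[OF refl]) (rule eq1)
    also have "\<dots> = (LINT t|lborel. (\<Sum>j=1..M. F j v t))"
      by (rule Bochner_Integration.integral_sum[symmetric]) (rule int2)
    also have "\<dots> = (LINT t|lborel. Pk a (of_real (v - t)) * Lam 0 (of_real t - \<i> * of_real a) +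
                     Pk a (of_real (v - t)) * Lam 0 (of_real t + \<i> * of_real a) - D * Pk a (of_real (v - t)))"
    proof (rule Bochner_Integration.integral_cong[OF refl])
      fix t
      have "(\<Sum>j=1..M. F j v t) = Pk a (of_real (v - t)) *
          (\<Sum>j=1..M. Lam j (of_real t - \<i> * of_real (vv j)) + Lam j (of_real t + \<i> * of_real (vv j)))"
        unfolding F_def by (simp add: sum_distrib_left)
      also have "(\<Sum>j=1..M. Lam j (of_real t - \<i> * of_real (vv j)) + Lam j (of_real t + \<i> * of_real (vv j))) =
          Lam 0 (of_real t - \<i> * of_real a) + Lam 0 (of_real t + \<i> * of_real a) - D"
        using D[of t] unfolding S_def by (simp add: algebra_simps)
      finally show "(\<Sum>j=1..M. F j v t) = Pk a (of_real (v - t)) * Lam 0 (of_real t - \<i> * of_real a) +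
                     Pk a (of_real (v - t)) * Lam 0 (of_real t + \<i> * of_real a) - D * Pk a (of_real (v - t))"
        by (simp add: algebra_simps)
    qed
    also have "\<dots> = (LINT t|lborel. Pk a (of_real (v - t)) * Lam 0 (of_real t - \<i> * of_real a)) +
                     (LINT t|lborel. Pk a (of_real (v - t)) * Lam 0 (of_real t + \<i> * of_real a)) -
                     D * (LINT t|lborel. Pk a (of_real (v - t)))"
      using P0(1,2) PI(1) by simp
    also have "\<dots> = L 0 v - D / 2"
      using P0(3) PI(2) Lr[of 0 v] by simp
    finally show ?thesis by simp
  qed
  show ?thesis
  proof (intro exI[of _ "D / 2"] conjI allI ballI)
    fix v :: real and j assume "j \<in> {1..M}"
    then show "integrable lborel (\<lambda>v'. kernel (vv 0) (vv j) (v - v') * L j v')"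
      using int1 unfolding a_def by blast
  next
    fix v :: real
    show "L 0 v = (\<Sum>j=1..M. integral\<^sup>L lborel (\<lambda>v'. kernel (vv 0) (vv j) (v - v') * L j v')) + D / 2"
      using main[of v] unfolding a_def .
  qed
qed

end
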